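(* Let $n\ge 2$ and let $\mu_0,\mu_1,\dots,\mu_n$ be the sequence of distributions obtained by applying a sequence of $n$ moves to an initial distribution $\mu_0$ with $\mu_0\{x\le 0\}\le n$ and $\mu_0\{x>0\}=0$. Then $\mu_n\{x>2n^{1/3}\log_2 n\}<1$.
   Context: A (discrete mass) distribution is a finite set $\mu=\{(x_1,m_1),\dots,(x_k,m_k)\}$ with $x_i\in\mathbb R$ and $m_i>0$; a signed distribution is the same without the positivity requirement. For $A\subseteq\mathbb R$, $\mu(A)=\sum_{x_i\in A}m_i$, and $\mu\{x>a\}$ means $\mu(\{x:x>a\})$, etc. Moments: $M_j[\mu]=\sum_i m_ix_i^j$. A move $v=([a,b],\delta)$ consists of an interval with $b-a=1$ and a signed distribution $\delta$ supported in $[a,b]$ with $M_0[\delta]=M_1[\delta]=0$; its center is $\frac{a+b}2$. It can be applied to $\mu$ if $\mu+\delta$ is a distribution, and then $v\mu=\mu+\delta$. A sequence of moves $v_1,\dots,v_\ell$ applied to $\mu_0$ produces $\mu_i=v_i\mu_{i-1}$. *)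

theory Defs
  imports Complex_Main
begin

text \<open>A (signed) discrete distribution is represented as a finitely supported
function from positions to masses: the point x carries mass f x.
The finite set of pairs (x_i, m_i) corresponds to the support with its masses.\<close>

definition supp :: "(real \<Rightarrow> real) \<Rightarrow> real set" where
  "supp f = {x. f x \<noteq> 0}"

definition signed_dist :: "(real \<Rightarrow> real) \<Rightarrow> bool" where
  "signed_dist f \<longleftrightarrow> finite (supp f)"

definition is_dist :: "(real \<Rightarrow> real) \<Rightarrow> bool" where
  "is_dist f \<longleftrightarrow> finite (supp f) \<and> (\<forall>x. f x \<ge> 0)"

definition mass :: "(real \<Rightarrow> real) \<Rightarrow> real set \<Rightarrow> real" where
  "mass f A = (\<Sum>x\<in>supp f \<inter> A. f x)"

definition moment :: "nat \<Rightarrow> (real \<Rightarrow> real) \<Rightarrow> real" where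
  "moment j f = (\<Sum>x\<in>supp f. f x * x ^ j)"

definition is_move :: "real \<Rightarrow> (real \<Rightarrow> real) \<Rightarrow> bool" where
  "is_move a \<delta> \<longleftrightarrow> signed_dist \<delta> \<and> supp \<delta> \<subseteq> {a..a+1}
     \<and> moment 0 \<delta> = 0 \<and> moment 1 \<delta> = 0"

definition move_sequence :: "nat \<Rightarrow> (nat \<Rightarrow> real \<Rightarrow> real) \<Rightarrow> (nat \<Rightarrow> real)
    \<Rightarrow> (nat \<Rightarrow> real \<Rightarrow> real) \<Rightarrow> bool" where
  "move_sequence n \<mu> a \<delta> \<longleftrightarrow> is_dist (\<mu> 0) \<and>
     (\<forall>i\<in>{1..n}. is_move (a i) (\<delta> i) \<and> is_dist (\<lambda>x. \<mu> (i-1) x + \<delta> i x)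
                 \<and> \<mu> i = (\<lambda>x. \<mu> (i-1) x + \<delta> i x))"

end

theory Submission
  imports Defs
begin

definition upd :: "int \<Rightarrow> (int \<Rightarrow> real) \<Rightarrow> (int \<Rightarrow> real)" where
  "upd i f = f(i := f i / 2 + (f (i-1) + f (i+1)) / 4)"

lemma upd_same: "upd i f i = f i / 2 + (f (i-1) + f (i+1)) / 4"
  by (simp add: upd_def)

lemma upd_other: "j \<noteq> i \<Longrightarrow> upd i f j = f j"
  by (simp add: upd_def)

fun proc :: "(int \<Rightarrow> real) \<Rightarrow> (nat \<Rightarrow> int) \<Rightarrow> nat \<Rightarrow> int \<Rightarrow> real" where
  "proc P0 \<sigma> 0 = P0"
| "proc P0 \<sigma> (Suc t) = upd (\<sigma> t) (proc P0 \<sigma> t)"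

definition good :: "real \<Rightarrow> (int \<Rightarrow> real) \<Rightarrow> bool" where
  "good nn f \<longleftrightarrow> (\<forall>j. 0 \<le> f j \<and> f j \<le> f (j-1) \<and> f (j-1) - f j \<le> nn
      \<and> f j - f (j+1) \<le> f (j-1) - f j)"

lemma goodD:
  assumes "good nn f"
  shows "0 \<le> f j" "f j \<le> f (j-1)" "f (j-1) - f j \<le> nn" "f j - f (j+1) \<le> f (j-1) - f j"
  using assms unfolding good_def by blast+

lemma good_upd:
  assumes G: "good nn f"
  shows "good nn (upd i f)"
proof -
  define F where "F = upd i f"
  define v where "v = f i / 2 + (f (i-1) + f (i+1)) / 4"
  have Fi: "F i = v" unfolding F_def v_def by (rule upd_same)
  have Fo: "\<And>k. k \<noteq> i \<Longrightarrow> F k = f k" unfolding F_def by (rule upd_other)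
  have a0: "f (i-1) - f i \<le> nn" "0 \<le> f i" "f i \<le> f (i-1)" "f i - f (i+1) \<le> f (i-1) - f i"
    using goodD[OF G, of i] by auto
  have a1: "f (i+1) \<le> f i" "0 \<le> f (i+1)" "f (i+1) - f (i+2) \<le> f i - f (i+1)"
    using goodD[OF G, of "i+1"] by (auto simp: algebra_simps)
  have a2: "f (i-1) - f i \<le> f (i-2) - f (i-1)" "f (i-1) \<le> f (i-2)" "0 \<le> f (i-1)"
     "f (i-2) - f (i-1) \<le> nn"
    using goodD[OF G, of "i-1"] by (auto simp: algebra_simps)
  have a3: "f (i+2) \<le> f (i+1)" "0 \<le> f (i+2)" "f (i+2) - f (i+3) \<le> f (i+1) - f (i+2)"
    using goodD[OF G, of "i+2"] by (auto simp: algebra_simps)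
  have "\<forall>j. 0 \<le> F j \<and> F j \<le> F (j-1) \<and> F (j-1) - F j \<le> nn \<and> F j - F (j+1) \<le> F (j-1) - F j"
  proof
    fix j
    consider "j = i" | "j = i+1" | "j = i - 1" | "j = i + 2" | "j \<noteq> i \<and> j \<noteq> i+1 \<and> j \<noteq> i-1 \<and> j \<noteq> i+2"
      by blast
    then show "0 \<le> F j \<and> F j \<le> F (j-1) \<and> F (j-1) - F j \<le> nn \<and> F j - F (j+1) \<le> F (j-1) - F j"
    proof cases
      case 1
      have "F j = v" "F (j-1) = f (i-1)" "F (j+1) = f (i+1)" using 1 Fi Fo by auto
      then show ?thesis using a0 a1 a2 unfolding v_def by argo
    next
      case 2
      have "F j = f (i+1)" "F (j-1) = v" "F (j+1) = f (i+2)" using 2 Fi Fo by (auto simp: algebra_simps)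
      then show ?thesis using a0 a1 a2 a3 unfolding v_def by argo
    next
      case 3
      have "F j = f (i-1)" "F (j-1) = f (i-2)" "F (j+1) = v" using 3 Fi Fo by (auto simp: algebra_simps)
      then show ?thesis using a0 a1 a2 a3 unfolding v_def by argo
    next
      case 4
      have "F j = f (i+2)" "F (j-1) = f (i+1)" "F (j+1) = f (i+3)" using 4 Fi Fo by (auto simp: algebra_simps)
      then show ?thesis using a0 a1 a2 a3 unfolding v_def by argo
    next
      case 5
      then have "F j = f j" "F (j-1) = f (j-1)" "F (j+1) = f (j+1)" using Fo by auto
      then show ?thesis using goodD[OF G, of j] by argo
    qed
  qed
  then show ?thesis unfolding good_def F_def .
qed

lemma upd_mono:
  assumes "good nn f" shows "f j \<le> upd i f j"
proof (cases "j = i")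
  case True
  have "f i - f (i+1) \<le> f (i-1) - f i" using goodD[OF assms, of i] by auto
  then show ?thesis using True by (simp add: upd_same; argo)
next
  case False then show ?thesis by (simp add: upd_other)
qed


lemma sum_change2:
  fixes h h' :: "'a \<Rightarrow> real"
  assumes "finite I" "i \<in> I" "j \<in> I" "i \<noteq> j" "\<And>k. k \<in> I \<Longrightarrow> k \<noteq> i \<Longrightarrow> k \<noteq> j \<Longrightarrow> h' k = h k"
  shows "sum h' I = sum h I + (h' i - h i) + (h' j - h j)"
proof -
  have "sum (\<lambda>k. h' k - h k) I = sum (\<lambda>k. h' k - h k) {i,j}"
    by (rule sum.mono_neutral_right) (use assms in auto)
  then show ?thesis using assms(4) by (simp add: sum_subtractf)
qed

lemma sum_change1:
  fixes h h' :: "'a \<Rightarrow> real"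
  assumes "finite I" "i \<in> I" "\<And>k. k \<in> I \<Longrightarrow> k \<noteq> i \<Longrightarrow> h' k = h k"
  shows "sum h' I = sum h I + (h' i - h i)"
proof -
  have "sum (\<lambda>k. h' k - h k) I = sum (\<lambda>k. h' k - h k) {i}"
    by (rule sum.mono_neutral_right) (use assms in auto)
  then show ?thesis by (simp add: sum_subtractf)
qed

lemma sum_change0:
  fixes h h' :: "'a \<Rightarrow> real"
  assumes "\<And>k. k \<in> I \<Longrightarrow> h' k = h k"
  shows "sum h' I = sum h I"
  using assms by (rule sum.cong[OF refl])


lemma cauchy_schwarz_sum:
  fixes x :: "nat \<Rightarrow> real"
  shows "(\<Sum>u<N. x u)^2 \<le> real N * (\<Sum>u<N. (x u)^2)"
proof (induction N)
  case 0 then show ?case by simp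
next
  case (Suc N)
  define S where "S = (\<Sum>u<N. x u)"
  define Q where "Q = (\<Sum>u<N. (x u)^2)"
  have IH: "S^2 \<le> real N * Q" using Suc by (simp add: S_def Q_def)
  have Q0: "0 \<le> Q" unfolding Q_def by (simp add: sum_nonneg)
  have key: "2 * S * x N \<le> Q + real N * (x N)^2"
  proof (cases "N = 0")
    case True then show ?thesis by (simp add: S_def Q_def)
  next
    case False
    then have Np: "real N > 0" by simp
    have "0 \<le> (S - real N * x N)^2" by simp
    then have "2 * S * x N * real N \<le> S^2 + (real N)^2 * (x N)^2"
      by (simp add: power2_eq_square algebra_simps)
    also have "\<dots> \<le> real N * Q + (real N)^2 * (x N)^2" using IH by simp
    finally have "real N * (2 * S * x N) \<le> real N * (Q + real N * (x N)^2)"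
      by (simp add: power2_eq_square algebra_simps)
    then show ?thesis using Np by simp
  qed
  have "(\<Sum>u<Suc N. x u)^2 = S^2 + 2 * S * x N + (x N)^2"
    by (simp add: S_def power2_eq_square algebra_simps)
  also have "\<dots> \<le> real N * Q + (Q + real N * (x N)^2) + (x N)^2" using IH key by linarith
  also have "\<dots> = real (Suc N) * (\<Sum>u<Suc N. (x u)^2)" by (simp add: Q_def algebra_simps)
  finally show ?case .
qed

locale latp =
  fixes P0 :: "int \<Rightarrow> real" and \<sigma> :: "nat \<Rightarrow> int" and nn :: real
  assumes good0: "good nn P0"
    and zero0: "\<And>j. j \<ge> 0 \<Longrightarrow> P0 j = 0"
begin

abbreviation P where "P \<equiv> proc P0 \<sigma>"

definition g :: "nat \<Rightarrow> int \<Rightarrow> real" where "g t j = P t (j-1) - P t j"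

definition tau :: "nat \<Rightarrow> real" where "tau t = P (Suc t) (\<sigma> t) - P t (\<sigma> t)"

lemma good_P: "good nn (P t)"
  by (induction t) (auto simp: good0 good_upd)

lemma P_nonneg: "0 \<le> P t j" using goodD(1)[OF good_P] .
lemma g_nonneg: "0 \<le> g t j" using goodD(2)[OF good_P] unfolding g_def by simp
lemma g_le: "g t j \<le> nn" using goodD(3)[OF good_P] unfolding g_def by simp
lemma g_dec: "g t (j+1) \<le> g t j" using goodD(4)[OF good_P, of t j] unfolding g_def by simp

lemma P_zero: "j \<ge> int t \<Longrightarrow> P t j = 0"
proof (induction t arbitrary: j)
  case 0 then show ?case by (simp add: zero0)
next
  case (Suc t)
  then have "j \<noteq> \<sigma> t \<or> j \<ge> int t + 1" by simp
  then show ?case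
  proof
    assume "j \<noteq> \<sigma> t" then show ?thesis using Suc by (simp add: upd_other)
  next
    assume h: "j \<ge> int t + 1"
    show ?thesis
    proof (cases "j = \<sigma> t")
      case True
      have "P t (j-1) = 0" "P t j = 0" "P t (j+1) = 0" using Suc.IH h by auto
      then show ?thesis using True by (simp add: upd_same)
    next
      case False then show ?thesis using Suc h by (simp add: upd_other)
    qed
  qed
qed

lemma P_step_other: "j \<noteq> \<sigma> t \<Longrightarrow> P (Suc t) j = P t j"
  by (simp add: upd_other)

lemma P_step_same: "P (Suc t) (\<sigma> t) = P t (\<sigma> t) + tau t"
  by (simp add: tau_def)

lemma tau_eq: "tau t = (g t (\<sigma> t) - g t (\<sigma> t + 1)) / 4"
  by (simp add: tau_def g_def upd_same algebra_simps)

lemma tau_nonneg: "0 \<le> tau t"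
  using g_dec[of t "\<sigma> t"] by (simp add: tau_eq)

lemma tau_le: "tau t \<le> g t (\<sigma> t) / 4"
  using g_nonneg[of t "\<sigma> t + 1"] by (simp add: tau_eq)

lemma P_mono_step: "P t j \<le> P (Suc t) j"
proof (cases "j = \<sigma> t")
  case True then show ?thesis using tau_nonneg[of t] P_step_same[of t] by simp
next
  case False then show ?thesis using P_step_other[of j t] by simp
qed

lemma P_mono: "t \<le> t' \<Longrightarrow> P t j \<le> P t' j"
proof (induction t' rule: dec_induct)
  case base then show ?case by simp
next
  case (step t') then show ?case using P_mono_step[of t' j] by linarith
qed

lemma P_dec: "i \<le> j \<Longrightarrow> P t j \<le> P t i"
proof (induction j rule: int_ge_induct)
  case base then show ?case by simp
next
  case (step j)
  have "P t (j+1) \<le> P t j" using goodD(2)[OF good_P, of t "j+1"] by simp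
  then show ?case using step by linarith
qed

lemma g_step: "g (Suc t) j = g t j - (if j = \<sigma> t then tau t else 0) + (if j = \<sigma> t + 1 then tau t else 0)"
proof -
  have e1: "P (Suc t) k = P t k + (if k = \<sigma> t then tau t else 0)" for k
    using P_step_other[of k t] P_step_same[of t] by auto
  show ?thesis unfolding g_def e1 by auto
qed

lemma g_zero: "j \<ge> int t + 1 \<Longrightarrow> g t j = 0"
  unfolding g_def using P_zero[of t j] P_zero[of t "j-1"] by simp

lemma tau_zero: "\<sigma> t \<ge> int t + 1 \<Longrightarrow> tau t = 0"
  unfolding tau_eq using g_zero[of t "\<sigma> t"] g_zero[of t "\<sigma> t + 1"] by simp

definition Phi :: "nat \<Rightarrow> nat \<Rightarrow> real" where
  "Phi M t = (\<Sum>k\<in>{1..M}. 2^k * g t (int k))"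

lemma Phi_nonneg_term: "k \<in> {1..M} \<Longrightarrow> 2^k * g t (int k) \<le> Phi M t"
  unfolding Phi_def
  by (rule member_le_sum) (auto intro: mult_nonneg_nonneg g_nonneg)

lemma Phi_nonneg: "0 \<le> Phi M t"
  unfolding Phi_def by (intro sum_nonneg mult_nonneg_nonneg) (auto intro: g_nonneg)

lemma Phi_step:
  assumes "t < M"
  shows "Phi M (Suc t) \<le> 5/4 * Phi M t + nn/2"
proof -
  define i where "i = \<sigma> t"
  have Pnn: "0 \<le> Phi M t" by (rule Phi_nonneg)
  consider "i \<le> -1" | "i = 0" | "1 \<le> i \<and> i \<le> int M - 1" | "i \<ge> int M" by linarith
  then show ?thesis
  proof cases
    case 1
    have "Phi M (Suc t) = Phi M t" unfolding Phi_def
      by (rule sum_change0) (use 1 in \<open>auto simp: g_step i_def\<close>)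
    then show ?thesis using Pnn g_le[of t 0] g_nonneg[of t 0] by simp
  next
    case 2
    have "Phi M (Suc t) = Phi M t + (2^1 * g (Suc t) (int 1) - 2^1 * g t (int 1))"
      unfolding Phi_def
      by (rule sum_change1) (use 2 assms in \<open>auto simp: g_step i_def\<close>)
    also have "\<dots> = Phi M t + 2 * tau t" using 2 by (simp add: g_step i_def)
    finally have "Phi M (Suc t) = Phi M t + 2 * tau t" .
    moreover have "tau t \<le> nn / 4" using tau_le[of t] g_le[of t "\<sigma> t"] by simp
    ultimately show ?thesis using Pnn by simp
  next
    case 3
    define i' where "i' = nat i"
    have ii: "i = int i'" "1 \<le> i'" "i' + 1 \<le> M" using 3 i'_def by auto
    have "Phi M (Suc t) = Phi M t + (2^i' * g (Suc t) (int i') - 2^i' * g t (int i'))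
          + (2^(i'+1) * g (Suc t) (int (i'+1)) - 2^(i'+1) * g t (int (i'+1)))"
      unfolding Phi_def
      by (rule sum_change2) (use ii in \<open>auto simp: g_step i_def\<close>)
    also have "\<dots> = Phi M t + 2^i' * tau t" using ii by (simp add: g_step i_def algebra_simps)
    finally have e: "Phi M (Suc t) = Phi M t + 2^i' * tau t" .
    have "2^i' * tau t \<le> 2^i' * (g t i / 4)" using tau_le[of t] by (simp add: i_def)
    also have "\<dots> = (2^i' * g t (int i')) / 4" using ii by simp
    also have "\<dots> \<le> Phi M t / 4" using Phi_nonneg_term[of i' M t] ii by simp
    finally show ?thesis using e g_le[of t 0] g_nonneg[of t 0] by simp
  next
    case 4
    have "tau t = 0" using tau_zero[of t] 4 assms by (simp add: i_def)
    then have "g (Suc t) k = g t k" for k by (simp add: g_step)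
    then have "Phi M (Suc t) = Phi M t" unfolding Phi_def by simp
    then show ?thesis using Pnn g_le[of t 0] g_nonneg[of t 0] by simp
  qed
qed

lemma Phi_zero: "Phi M 0 = 0"
  unfolding Phi_def using g_zero[of 0] by simp

lemma Phi_bound: "t \<le> M \<Longrightarrow> Phi M t \<le> 2 * nn * ((5/4)^t - 1)"
proof (induction t)
  case 0 then show ?case by (simp add: Phi_zero)
next
  case (Suc t)
  then have "Phi M (Suc t) \<le> 5/4 * Phi M t + nn/2" by (intro Phi_step) simp
  also have "\<dots> \<le> 5/4 * (2 * nn * ((5/4)^t - 1)) + nn/2" using Suc by simp
  also have "\<dots> = 2 * nn * ((5/4)^(Suc t) - 1)" by (simp add: algebra_simps)
  finally show ?case .
qed

lemma P_tail: "T \<le> M \<Longrightarrow> P t (int T) = P t (int M) + (\<Sum>k\<in>{T+1..M}. g t (int k))"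
proof (induction M rule: dec_induct)
  case base then show ?case by simp
next
  case (step M)
  have "{T+1..Suc M} = insert (Suc M) {T+1..M}" using step by auto
  then have "(\<Sum>k\<in>{T+1..Suc M}. g t (int k)) = g t (int (Suc M)) + (\<Sum>k\<in>{T+1..M}. g t (int k))"
    by simp
  then show ?case using step unfolding g_def by simp
qed

lemma geom_tail: "T \<le> M \<Longrightarrow> (\<Sum>k\<in>{T+1..M}. (1/2::real)^k) = (1/2)^T - (1/2)^M"
proof (induction M rule: dec_induct)
  case base then show ?case by simp
next
  case (step M)
  have "{T+1..Suc M} = insert (Suc M) {T+1..M}" using step by auto
  then show ?case using step by simp
qed

lemma regime1: "P N (int T) \<le> 2 * nn * (5/4)^N / 2^T"
proof -
  define M where "M = N + T"
  have "P N (int T) = P N (int M) + (\<Sum>k\<in>{T+1..M}. g N (int k))"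
    by (rule P_tail) (simp add: M_def)
  also have "P N (int M) = 0" by (rule P_zero) (simp add: M_def)
  also have "(\<Sum>k\<in>{T+1..M}. g N (int k)) \<le> (\<Sum>k\<in>{T+1..M}. Phi M N * (1/2)^k)"
  proof (rule sum_mono)
    fix k assume k: "k \<in> {T+1..M}"
    have "2^k * g N (int k) \<le> Phi M N" using Phi_nonneg_term[of k M N] k by simp
    then show "g N (int k) \<le> Phi M N * (1/2)^k"
      by (simp add: field_simps power_one_over)
  qed
  also have "\<dots> = Phi M N * (\<Sum>k\<in>{T+1..M}. (1/2::real)^k)"
    by (simp add: sum_distrib_left)
  also have "\<dots> = Phi M N * ((1/2)^T - (1/2)^M)"
    using geom_tail[of T M] by (simp add: M_def)
  also have "\<dots> \<le> Phi M N * (1/2)^T"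
  proof -
    have "0 \<le> Phi M N" by (rule Phi_nonneg)
    then show ?thesis by (simp add: mult_left_mono)
  qed
  also have "\<dots> \<le> 2 * nn * ((5/4)^N - 1) * (1/2)^T"
    by (rule mult_right_mono) (auto intro: Phi_bound simp: M_def)
  also have "\<dots> \<le> 2 * nn * (5/4)^N / 2^T"
  proof -
    have "0 \<le> nn" using g_le[of 0 0] g_nonneg[of 0 0] by simp
    then show ?thesis by (simp add: field_simps power_one_over)
  qed
  finally show ?thesis by simp
qed

definition Qw :: "nat \<Rightarrow> nat \<Rightarrow> nat \<Rightarrow> real" where
  "Qw M m t = (\<Sum>k\<in>{m+1..M}. (g t (int k))^2)"

definition Sw :: "nat \<Rightarrow> nat \<Rightarrow> nat \<Rightarrow> real" where
  "Sw M m t = (\<Sum>u<t. if int m + 1 \<le> \<sigma> u \<and> \<sigma> u \<le> int M - 1 then (tau u)^2 else 0)"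

lemma energy_inv:
  assumes "t \<le> N" "N < M" "m + 1 \<le> M" and Gam: "\<And>u. u \<le> N \<Longrightarrow> g u (int m + 1) \<le> \<Gamma>"
  shows "Qw M m t + 6 * Sw M m t \<le> 2 * \<Gamma> * P t (int m)"
  using assms(1)
proof (induction t)
  case 0
  have "Qw M m 0 = 0" unfolding Qw_def using g_zero[of 0] by simp
  moreover have "P 0 (int m) = 0" using P_zero[of 0 "int m"] by simp
  ultimately show ?case by (simp add: Sw_def)
next
  case (Suc t)
  have tN: "t < N" "t < M" using Suc.prems assms(2) by auto
  have IH: "Qw M m t + 6 * Sw M m t \<le> 2 * \<Gamma> * P t (int m)" using Suc tN by simp
  define i where "i = \<sigma> t"
  have Sstep: "Sw M m (Suc t) = Sw M m t + (if int m + 1 \<le> i \<and> i \<le> int M - 1 then (tau t)^2 else 0)"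
    by (simp add: Sw_def i_def)
  have Pm: "P (Suc t) (int m) = P t (int m) + (if int m = i then tau t else 0)"
    using P_step_other[of "int m" t] P_step_same[of t] by (auto simp: i_def)
  consider "i \<le> int m - 1" | "i = int m" | "int m + 1 \<le> i \<and> i \<le> int M - 1" | "i \<ge> int M" by linarith
  then show ?case
  proof cases
    case 1
    have "Qw M m (Suc t) = Qw M m t" unfolding Qw_def
      by (rule sum_change0) (use 1 in \<open>auto simp: g_step i_def\<close>)
    then show ?thesis using IH 1 Sstep Pm by simp
  next
    case 2
    have q: "Qw M m (Suc t) = Qw M m t + ((g (Suc t) (int (m+1)))^2 - (g t (int (m+1)))^2)"
      unfolding Qw_def
      by (rule sum_change1) (use 2 tN assms(3) in \<open>auto simp: g_step i_def\<close>)
    define y where "y = g t (int (m+1))"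
    have y1: "g (Suc t) (int (m+1)) = y + tau t"
      using 2 by (simp add: g_step i_def y_def)
    have y2: "y + tau t \<le> \<Gamma>" using Gam[of "Suc t"] tN y1 by (simp add: add.commute)
    have y3: "0 \<le> y" unfolding y_def by (rule g_nonneg)
    have y4: "0 \<le> tau t" by (rule tau_nonneg)
    have "(y + tau t)^2 - y^2 = tau t * (2 * y + tau t)" by (simp add: power2_eq_square algebra_simps)
    also have "\<dots> \<le> tau t * (2 * \<Gamma>)" using y2 y3 y4 by (intro mult_left_mono) auto
    finally have "Qw M m (Suc t) \<le> Qw M m t + 2 * \<Gamma> * tau t" using q y1 by (simp add: y_def algebra_simps)
    then show ?thesis using IH 2 Sstep Pm by (simp add: algebra_simps)
  next
    case 3
    define i' where "i' = nat i"
    have ii: "i = int i'" "m + 1 \<le> i'" "i' + 1 \<le> M" using 3 i'_def by auto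
    have "Qw M m (Suc t) = Qw M m t + ((g (Suc t) (int i'))^2 - (g t (int i'))^2)
          + ((g (Suc t) (int (i'+1)))^2 - (g t (int (i'+1)))^2)"
      unfolding Qw_def
      by (rule sum_change2) (use ii in \<open>auto simp: g_step i_def\<close>)
    moreover have "g (Suc t) (int i') = g t (int i') - tau t" using ii by (simp add: g_step i_def)
    moreover have "g (Suc t) (int (i'+1)) = g t (int (i'+1)) + tau t" using ii by (simp add: g_step i_def)
    ultimately have q: "Qw M m (Suc t) = Qw M m t + ((g t (int i') - tau t)^2 - (g t (int i'))^2)
          + ((g t (int (i'+1)) + tau t)^2 - (g t (int (i'+1)))^2)" by simp
    have e3: "g t (int i') = g t (int (i'+1)) + 4 * tau t" using ii tau_eq[of t] by (simp add: i_def add.commute)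
    have "Qw M m (Suc t) = Qw M m t - 6 * (tau t)^2"
      unfolding q e3 by (simp add: power2_eq_square algebra_simps)
    then show ?thesis using IH 3 Sstep Pm by (simp add: algebra_simps)
  next
    case 4
    have "tau t = 0" using tau_zero[of t] 4 tN by (simp add: i_def)
    then have "g (Suc t) k = g t k" for k by (simp add: g_step)
    then have "Qw M m (Suc t) = Qw M m t" unfolding Qw_def by simp
    then show ?thesis using IH 4 Sstep Pm \<open>tau t = 0\<close> assms(3) by simp
  qed
qed

lemma flux:
  "(\<Sum>k\<in>{m+1..m+d}. P t (int k)) = (\<Sum>u<t. if int m + 1 \<le> \<sigma> u \<and> \<sigma> u \<le> int (m+d) then tau u else 0)"
proof (induction t)
  case 0 then show ?case using P_zero[of 0] by simp
next
  case (Suc t)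
  have e: "P (Suc t) (int k) = P t (int k) + (if int k = \<sigma> t then tau t else 0)" for k
    using P_step_other[of "int k" t] P_step_same[of t] by auto
  have "(\<Sum>k\<in>{m+1..m+d}. P (Suc t) (int k)) = (\<Sum>k\<in>{m+1..m+d}. P t (int k))
        + (\<Sum>k\<in>{m+1..m+d}. if int k = \<sigma> t then tau t else 0)"
    unfolding e by (simp add: sum.distrib)
  also have "(\<Sum>k\<in>{m+1..m+d}. if int k = \<sigma> t then tau t else 0)
        = (if int m + 1 \<le> \<sigma> t \<and> \<sigma> t \<le> int (m+d) then tau t else 0)"
  proof (cases "int m + 1 \<le> \<sigma> t \<and> \<sigma> t \<le> int (m+d)")
    case True
    then obtain k0 where k0: "\<sigma> t = int k0" "k0 \<in> {m+1..m+d}"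
      by (metis atLeastAtMost_iff int_eq_iff nat_int nat_le_iff of_nat_add of_nat_le_iff
          le_add1 dual_order.trans zless_imp_add1_zle of_nat_1 zle_int)
    have "(\<Sum>k\<in>{m+1..m+d}. if int k = \<sigma> t then tau t else 0) = (\<Sum>k\<in>{m+1..m+d}. if k = k0 then tau t else 0)"
      using k0 by (intro sum.cong) auto
    also have "\<dots> = tau t" using k0 by simp
    finally show ?thesis using True by simp
  next
    case False
    then have "\<And>k. k \<in> {m+1..m+d} \<Longrightarrow> int k \<noteq> \<sigma> t" by auto
    then have "(\<Sum>k\<in>{m+1..m+d}. if int k = \<sigma> t then tau t else 0) = 0"
      by (intro sum.neutral) auto
    then show ?thesis by (simp only: if_not_P[OF False])
  qed
  finally show ?case using Suc by simp
qed

lemma g_dec_gen: "i \<le> j \<Longrightarrow> g t j \<le> g t i"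
proof (induction j rule: int_ge_induct)
  case base then show ?case by simp
next
  case (step j) then show ?case using g_dec[of t j] by linarith
qed

lemma P_telescope: "P t j = P t (j + int d) + (\<Sum>r<d. g t (j + int r + 1))"
proof (induction d)
  case 0 then show ?case by simp
next
  case (Suc d) then show ?case by (simp add: g_def algebra_simps)
qed

lemma slope_bound: "P t j \<le> P t (j + int d) + nn * real d"
proof -
  have "(\<Sum>r<d. g t (j + int r + 1)) \<le> (\<Sum>r<d. nn)" by (rule sum_mono) (rule g_le)
  then show ?thesis using P_telescope[of t j d] by (simp add: mult.commute)
qed

lemma gam_bound:
  assumes "K \<ge> 1" "u \<le> N"
  shows "g u (j + 1) \<le> P N (j + 1 - int K) / real K"
proof -
  have "(\<Sum>r<K. g u (j + 1)) \<le> (\<Sum>r<K. g u ((j + 1 - int K) + int r + 1))"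
    by (rule sum_mono) (rule g_dec_gen, simp)
  also have "\<dots> = P u (j + 1 - int K) - P u (j + 1)"
    using P_telescope[of u "j + 1 - int K" K] by simp
  also have "\<dots> \<le> P N (j + 1 - int K)"
    using P_nonneg[of u "j+1"] P_mono[OF assms(2), of "j + 1 - int K"] by linarith
  finally have "real K * g u (j + 1) \<le> P N (j + 1 - int K)" by simp
  then show ?thesis using assms(1) by (simp add: field_simps)
qed

lemma sum_lower: "real d * P t (int (m + d)) \<le> (\<Sum>k\<in>{m+1..m+d}. P t (int k))"
proof -
  have "(\<Sum>k\<in>{m+1..m+d}. P t (int (m + d))) \<le> (\<Sum>k\<in>{m+1..m+d}. P t (int k))"
    by (rule sum_mono) (rule P_dec, simp)
  then show ?thesis by simp
qed

lemma level_lemma: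
  assumes "N < M" "m + d + 1 \<le> M" and Gam: "\<And>u. u \<le> N \<Longrightarrow> g u (int m + 1) \<le> \<Gamma>"
  shows "(\<Sum>k\<in>{m+1..m+d}. P N (int k))^2 \<le> real N * (\<Gamma> * P N (int m) / 3)"
proof -
  define x where "x u = (if int m + 1 \<le> \<sigma> u \<and> \<sigma> u \<le> int (m+d) then tau u else 0)" for u
  have "(\<Sum>k\<in>{m+1..m+d}. P N (int k))^2 = (\<Sum>u<N. x u)^2" unfolding x_def flux ..
  also have "\<dots> \<le> real N * (\<Sum>u<N. (x u)^2)" by (rule cauchy_schwarz_sum)
  also have "(\<Sum>u<N. (x u)^2) \<le> Sw M m N" unfolding Sw_def x_def
    by (rule sum_mono) (use assms(2) in auto)
  also have "Sw M m N \<le> \<Gamma> * P N (int m) / 3"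
  proof -
    have E: "Qw M m N + 6 * Sw M m N \<le> 2 * \<Gamma> * P N (int m)"
      by (rule energy_inv) (use assms in auto)
    have "0 \<le> Qw M m N" unfolding Qw_def by (simp add: sum_nonneg)
    then show ?thesis using E by linarith
  qed
  finally show ?thesis by (simp add: mult_left_mono)
qed

lemma chain_step:
  assumes d1: "d \<ge> 1" and Gam: "\<And>u. u \<le> N \<Longrightarrow> g u (int m + 1) \<le> \<Gamma>"
  shows "(real d * P N (int (m + d)))^2 \<le> real N * (\<Gamma> * P N (int m) / 3)"
proof -
  have "0 \<le> real d * P N (int (m + d))" using P_nonneg by simp
  then have "(real d * P N (int (m + d)))^2 \<le> (\<Sum>k\<in>{m+1..m+d}. P N (int k))^2"
    using sum_lower[of d N m] by (intro power_mono) auto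
  also have "\<dots> \<le> real N * (\<Gamma> * P N (int m) / 3)"
    by (rule level_lemma[where M = "N + m + d + 1"]) (use Gam in auto)
  finally show ?thesis .
qed

lemma chain_first:
  assumes "d \<ge> 1"
  shows "(real d * P N (int d))^2 \<le> real N * (nn * P N 0 / 3)"
  using chain_step[of d N 0 nn] assms g_le by simp

lemma chain_next:
  assumes d1: "d \<ge> 1" and i1: "i \<ge> 1"
  shows "(real d * P N (int ((i+1)*d)))^2 \<le> real N * ((P N (int ((i-1)*d)) / real d) * P N (int (i*d)) / 3)"
proof -
  have G: "g u (int (i*d) + 1) \<le> P N (int ((i-1)*d)) / real d" if "u \<le> N" for u
  proof -
    have "g u (int (i*d) + 1) \<le> P N (int (i*d) + 1 - int d) / real d"
      by (rule gam_bound) (use d1 that in auto)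
    also have "\<dots> \<le> P N (int ((i-1)*d)) / real d"
    proof (rule divide_right_mono)
      have "int ((i-1)*d) \<le> int (i*d) + 1 - int d" using i1
        by (simp add: of_nat_diff diff_mult_distrib)
      then show "P N (int (i*d) + 1 - int d) \<le> P N (int ((i-1)*d))" by (rule P_dec)
    qed simp
    finally show ?thesis .
  qed
  have "(real d * P N (int (i*d + d)))^2 \<le> real N * ((P N (int ((i-1)*d)) / real d) * P N (int (i*d)) / 3)"
    by (rule chain_step) (use d1 G in auto)
  then show ?thesis by (simp add: add.commute)
qed

lemma chain_w:
  assumes d1: "d \<ge> 1" and i1: "i \<ge> 1"
  shows "(P N (int (i*d)))^2 * P N (int ((i-1)*d)) \<le>
     (real N / (3 * real d ^ 3))^(i-1) * ((P N (int d))^2 * P N 0)"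
  using i1
proof (induction i rule: dec_induct)
  case base then show ?case by simp
next
  case (step i)
  define c where "c = real N / (3 * real d ^ 3)"
  have dpos: "real d > 0" using d1 by simp
  have h: "(real d * P N (int ((i+1)*d)))^2 \<le> real N * ((P N (int ((i-1)*d)) / real d) * P N (int (i*d)) / 3)"
    by (rule chain_next) (use d1 step in auto)
  have h2: "(P N (int ((i+1)*d)))^2 \<le> c * (P N (int ((i-1)*d)) * P N (int (i*d)))"
  proof -
    have "real d ^ 2 * (P N (int ((i+1)*d)))^2 \<le> real N * ((P N (int ((i-1)*d)) / real d) * P N (int (i*d)) / 3)"
      using h by (simp add: power_mult_distrib)
    then have "(P N (int ((i+1)*d)))^2 \<le> real N * ((P N (int ((i-1)*d)) / real d) * P N (int (i*d)) / 3) / real d ^ 2"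
      using dpos by (simp add: field_simps)
    also have "\<dots> = c * (P N (int ((i-1)*d)) * P N (int (i*d)))"
      unfolding c_def using dpos by (simp add: field_simps power2_eq_square power3_eq_cube)
    finally show ?thesis .
  qed
  have "(P N (int (Suc i * d)))^2 * P N (int ((Suc i - 1)*d)) = (P N (int ((i+1)*d)))^2 * P N (int (i*d))"
    by simp
  also have "\<dots> \<le> c * (P N (int ((i-1)*d)) * P N (int (i*d))) * P N (int (i*d))"
    by (rule mult_right_mono[OF h2 P_nonneg])
  also have "\<dots> = c * ((P N (int (i*d)))^2 * P N (int ((i-1)*d)))"
    by (simp add: power2_eq_square algebra_simps)
  also have "\<dots> \<le> c * (c^(i-1) * ((P N (int d))^2 * P N 0))"
  proof (rule mult_left_mono)
    show "0 \<le> c" unfolding c_def by simp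
  qed (use step c_def in simp)
  also have "\<dots> = c^(Suc i - 1) * ((P N (int d))^2 * P N 0)"
    using step(1) by (cases i) auto
  finally show ?case unfolding c_def .
qed

lemma chain_final:
  assumes d1: "d \<ge> 1" and k1: "k \<ge> 1"
  shows "(P N (int (k*d)))^3 \<le> (real N / (3 * real d ^ 3))^(k-1) * ((P N (int d))^2 * P N 0)"
proof -
  have "P N (int (k*d)) \<le> P N (int ((k-1)*d))" by (rule P_dec) (simp add: mult_right_mono)
  then have "(P N (int (k*d)))^3 \<le> (P N (int (k*d)))^2 * P N (int ((k-1)*d))"
    by (simp add: power3_eq_cube power2_eq_square mult_left_mono P_nonneg)
  also have "\<dots> \<le> (real N / (3 * real d ^ 3))^(k-1) * ((P N (int d))^2 * P N 0)"
    by (rule chain_w[OF d1 k1])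
  finally show ?thesis .
qed

end


definition Psi :: "(real \<Rightarrow> real) \<Rightarrow> real \<Rightarrow> real" where
  "Psi f s = (\<Sum>x\<in>supp f. f x * max 0 (x - s))"

lemma sum_supp_superset:
  assumes "finite S" "supp f \<subseteq> S"
  shows "(\<Sum>x\<in>supp f. f x * h x) = (\<Sum>x\<in>S. f x * h x)"
  by (rule sum.mono_neutral_left) (use assms in \<open>auto simp: supp_def\<close>)

lemma sum_supp_superset1:
  assumes "finite S" "supp f \<subseteq> S"
  shows "(\<Sum>x\<in>supp f. f x) = (\<Sum>x\<in>S. f x)"
  by (rule sum.mono_neutral_left) (use assms in \<open>auto simp: supp_def\<close>)

lemma supp_add: "supp (\<lambda>x. f x + e x) \<subseteq> supp f \<union> supp e"
  by (auto simp: supp_def)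

lemma tent_ge:
  fixes y :: real
  shows "max 0 (y + 1) - 2 * max 0 y + max 0 (y - 1) \<ge> (if 0 < y \<and> y \<le> 1 then 1 - y else 0) + (if -1 \<le> y \<and> y < 0 then 1 + y else 0)"
  by (auto simp: max_def)

lemma move_ineq:
  assumes mu: "is_dist \<mu>" and nu: "is_dist (\<lambda>x. \<mu> x + \<delta> x)" and mv: "is_move a \<delta>"
    and s1: "a < s" and s2: "s \<le> a + 1"
  shows "Psi (\<lambda>x. \<mu> x + \<delta> x) s \<le> Psi \<mu> s / 2 + (Psi \<mu> (s - 1) + Psi \<mu> (s + 1)) / 4"
proof -
  define \<nu> where "\<nu> = (\<lambda>x. \<mu> x + \<delta> x)"
  define S where "S = supp \<mu> \<union> supp \<delta>"
  have fS: "finite S" using mu mv unfolding S_def is_dist_def is_move_def signed_dist_def by auto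
  have suppd: "supp \<delta> \<subseteq> {a..a+1}" using mv unfolding is_move_def by auto
  have dzero: "\<And>x. x < a \<or> x > a + 1 \<Longrightarrow> \<delta> x = 0" using suppd unfolding supp_def by force
  have mu0: "\<And>x. 0 \<le> \<mu> x" using mu unfolding is_dist_def by auto
  have nu0: "\<And>x. 0 \<le> \<nu> x" using nu unfolding is_dist_def \<nu>_def by auto
  have m0: "(\<Sum>x\<in>S. \<delta> x) = 0"
  proof -
    have "moment 0 \<delta> = 0" using mv unfolding is_move_def by auto
    then have "(\<Sum>x\<in>supp \<delta>. \<delta> x) = 0" unfolding moment_def by simp
    then show ?thesis using sum_supp_superset1[OF fS, of \<delta>] S_def by auto
  qed
  have m1: "(\<Sum>x\<in>S. \<delta> x * x) = 0"
  proof -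
    have "moment 1 \<delta> = 0" using mv unfolding is_move_def by auto
    then have "(\<Sum>x\<in>supp \<delta>. \<delta> x * x) = 0" unfolding moment_def by simp
    then show ?thesis using sum_supp_superset[OF fS, of \<delta> "\<lambda>x. x"] S_def by auto
  qed
  have PsiS: "Psi f r = (\<Sum>x\<in>S. f x * max 0 (x - r))" if "supp f \<subseteq> S" for f r
    unfolding Psi_def using sum_supp_superset[OF fS that] .
  have suppnu: "supp \<nu> \<subseteq> S" unfolding \<nu>_def S_def using supp_add by blast
  have suppmu: "supp \<mu> \<subseteq> S" unfolding S_def by auto
  define D where "D = (\<Sum>x\<in>S. \<delta> x * max 0 (x - s))"
  have nuS: "Psi \<nu> r = Psi \<mu> r + (\<Sum>x\<in>S. \<delta> x * max 0 (x - r))" for r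
    unfolding PsiS[OF suppnu] PsiS[OF suppmu] by (simp add: \<nu>_def sum.distrib algebra_simps)
  have Dp1: "(\<Sum>x\<in>S. \<delta> x * max 0 (x - (s + 1))) = 0"
  proof -
    have "\<delta> x * max 0 (x - (s + 1)) = 0" for x
      using dzero[of x] s1 by (cases "x > a + 1") (auto simp: max_def)
    then show ?thesis by (simp del: mult_eq_0_iff)
  qed
  have Dm1: "(\<Sum>x\<in>S. \<delta> x * max 0 (x - (s - 1))) = 0"
  proof -
    have "\<delta> x * max 0 (x - (s - 1)) = \<delta> x * x - (s - 1) * \<delta> x" for x
      using dzero[of x] s2 by (cases "x < a") (auto simp: max_def algebra_simps)
    then have "(\<Sum>x\<in>S. \<delta> x * max 0 (x - (s - 1))) = (\<Sum>x\<in>S. \<delta> x * x) - (s - 1) * (\<Sum>x\<in>S. \<delta> x)"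
      by (simp add: sum_subtractf sum_distrib_left)
    then show ?thesis using m0 m1 by simp
  qed
  define \<alpha> where "\<alpha> = a + 1 - s"
  define \<beta> where "\<beta> = s - a"
  define A where "A = (\<Sum>x\<in>S. \<nu> x * (if s < x \<and> x \<le> a + 1 then x - s else 0))"
  define B where "B = (\<Sum>x\<in>S. \<nu> x * (if a \<le> x \<and> x < s then s - x else 0))"
  define TR where "TR = (\<Sum>x\<in>S. \<nu> x * (if s < x \<and> x \<le> a + 1 then 1 - (x - s) else 0))"
  define TL where "TL = (\<Sum>x\<in>S. \<nu> x * (if a \<le> x \<and> x < s then 1 - (s - x) else 0))"
  define T where "T = Psi \<nu> (s - 1) - 2 * Psi \<nu> s + Psi \<nu> (s + 1)"
  have DA: "D \<le> A" unfolding D_def A_def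
  proof (rule sum_mono)
    fix x assume "x \<in> S"
    show "\<delta> x * max 0 (x - s) \<le> \<nu> x * (if s < x \<and> x \<le> a + 1 then x - s else 0)"
    proof (cases "\<delta> x = 0")
      case True then show ?thesis using nu0[of x] by (auto intro: mult_nonneg_nonneg)
    next
      case False
      then have "x \<le> a + 1" using dzero[of x] by force
      then show ?thesis using mu0[of x] unfolding \<nu>_def
        by (cases "s < x") (auto simp: max_def intro: mult_right_mono)
    qed
  qed
  have DB: "D \<le> B"
  proof -
    have eq: "\<delta> x * max 0 (x - s) = \<delta> x * max 0 (s - x) + (\<delta> x * x - s * \<delta> x)" for x
      by (auto simp: max_def algebra_simps)
    have "D = (\<Sum>x\<in>S. \<delta> x * max 0 (s - x)) + ((\<Sum>x\<in>S. \<delta> x * x) - s * (\<Sum>x\<in>S. \<delta> x))"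
      unfolding D_def eq by (simp add: sum.distrib sum_subtractf sum_distrib_left)
    then have D2: "D = (\<Sum>x\<in>S. \<delta> x * max 0 (s - x))" using m0 m1 by simp
    show ?thesis unfolding D2 B_def
    proof (rule sum_mono)
      fix x assume "x \<in> S"
      show "\<delta> x * max 0 (s - x) \<le> \<nu> x * (if a \<le> x \<and> x < s then s - x else 0)"
      proof (cases "\<delta> x = 0")
        case True then show ?thesis using nu0[of x] by (auto intro: mult_nonneg_nonneg)
      next
        case False
        then have "a \<le> x" using dzero[of x] by force
        then show ?thesis using mu0[of x] unfolding \<nu>_def
          by (cases "x < s") (auto simp: max_def intro: mult_right_mono)
      qed
    qed
  qed
  have AT: "A * \<beta> \<le> \<alpha> * TR"
  proof -
    have "A * \<beta> = (\<Sum>x\<in>S. \<nu> x * (if s < x \<and> x \<le> a + 1 then (x - s) * \<beta> else 0))"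
      unfolding A_def by (simp add: sum_distrib_right) (intro sum.cong, auto)
    also have "\<dots> \<le> (\<Sum>x\<in>S. \<nu> x * (if s < x \<and> x \<le> a + 1 then \<alpha> * (1 - (x - s)) else 0))"
    proof (rule sum_mono)
      fix x assume "x \<in> S"
      have "s < x \<and> x \<le> a + 1 \<Longrightarrow> (x - s) * \<beta> \<le> \<alpha> * (1 - (x - s))"
        unfolding \<alpha>_def \<beta>_def by (simp add: algebra_simps)
      then show "\<nu> x * (if s < x \<and> x \<le> a + 1 then (x - s) * \<beta> else 0)
          \<le> \<nu> x * (if s < x \<and> x \<le> a + 1 then \<alpha> * (1 - (x - s)) else 0)"
        using nu0[of x] by (auto intro: mult_left_mono)
    qed
    also have "\<dots> = \<alpha> * TR" unfolding TR_def by (simp add: sum_distrib_left) (intro sum.cong, auto)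
    finally show ?thesis .
  qed
  have BT: "B * \<alpha> \<le> \<beta> * TL"
  proof -
    have "B * \<alpha> = (\<Sum>x\<in>S. \<nu> x * (if a \<le> x \<and> x < s then (s - x) * \<alpha> else 0))"
      unfolding B_def by (simp add: sum_distrib_right) (intro sum.cong, auto)
    also have "\<dots> \<le> (\<Sum>x\<in>S. \<nu> x * (if a \<le> x \<and> x < s then \<beta> * (1 - (s - x)) else 0))"
    proof (rule sum_mono)
      fix x assume "x \<in> S"
      have "a \<le> x \<and> x < s \<Longrightarrow> (s - x) * \<alpha> \<le> \<beta> * (1 - (s - x))"
        unfolding \<alpha>_def \<beta>_def by (simp add: algebra_simps)
      then show "\<nu> x * (if a \<le> x \<and> x < s then (s - x) * \<alpha> else 0)
          \<le> \<nu> x * (if a \<le> x \<and> x < s then \<beta> * (1 - (s - x)) else 0)"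
        using nu0[of x] by (auto intro: mult_left_mono)
    qed
    also have "\<dots> = \<beta> * TL" unfolding TL_def by (simp add: sum_distrib_left) (intro sum.cong, auto)
    finally show ?thesis .
  qed
  have TRn: "0 \<le> TR" unfolding TR_def
    by (intro sum_nonneg mult_nonneg_nonneg) (use nu0 s1 s2 in auto)
  have TLn: "0 \<le> TL" unfolding TL_def
    by (intro sum_nonneg mult_nonneg_nonneg) (use nu0 s1 s2 in auto)
  have TT: "TR + TL \<le> T"
  proof -
    have "T = (\<Sum>x\<in>S. \<nu> x * (max 0 (x - s + 1) - 2 * max 0 (x - s) + max 0 (x - s - 1)))"
      unfolding T_def PsiS[OF suppnu]
      by (simp add: sum.distrib sum_subtractf sum_distrib_left algebra_simps)
    moreover have "TR + TL = (\<Sum>x\<in>S. \<nu> x * ((if 0 < x - s \<and> x - s \<le> 1 \<and> x \<le> a + 1 then 1 - (x - s) else 0)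
        + (if -1 \<le> x - s \<and> x - s < 0 \<and> a \<le> x then 1 + (x - s) else 0)))"
      unfolding TR_def TL_def by (simp add: sum.distrib[symmetric] algebra_simps) (intro sum.cong; use s1 s2 in auto)
    moreover have "\<dots> \<le> (\<Sum>x\<in>S. \<nu> x * (max 0 (x - s + 1) - 2 * max 0 (x - s) + max 0 (x - s - 1)))"
    proof (rule sum_mono)
      fix x assume "x \<in> S"
      have h: "(if 0 < x - s \<and> x - s \<le> 1 \<and> x \<le> a + 1 then 1 - (x - s) else 0)
        + (if -1 \<le> x - s \<and> x - s < 0 \<and> a \<le> x then 1 + (x - s) else 0)
        \<le> max 0 (x - s + 1) - 2 * max 0 (x - s) + max 0 (x - s - 1)"
        using tent_ge[of "x - s"] by (auto split: if_split_asm)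
      show "\<nu> x * ((if 0 < x - s \<and> x - s \<le> 1 \<and> x \<le> a + 1 then 1 - (x - s) else 0)
        + (if -1 \<le> x - s \<and> x - s < 0 \<and> a \<le> x then 1 + (x - s) else 0))
        \<le> \<nu> x * (max 0 (x - s + 1) - 2 * max 0 (x - s) + max 0 (x - s - 1))"
        using mult_left_mono[OF h nu0[of x]] .
    qed
    ultimately show ?thesis by simp
  qed
  have DT: "D \<le> T / 2"
  proof (cases "D \<le> 0")
    case True then show ?thesis using TT TRn TLn by simp
  next
    case False
    then have Dp: "D > 0" by simp
    have Ap: "A > 0" "B > 0" using DA DB Dp by auto
    have bp: "\<beta> > 0" unfolding \<beta>_def using s1 by simp
    have ap: "\<alpha> > 0"
    proof (rule ccontr)
      assume "\<not> \<alpha> > 0"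
      then have "\<alpha> = 0" unfolding \<alpha>_def using s2 by simp
      then have "A * \<beta> \<le> 0" using AT by simp
      moreover have "A * \<beta> > 0" using Ap bp by simp
      ultimately show False by simp
    qed
    have c1: "D * D \<le> A * B" by (rule mult_mono[OF DA DB]) (use DA Dp in auto)
    have c2: "(A * B) * (\<alpha> * \<beta>) \<le> (TR * TL) * (\<alpha> * \<beta>)"
    proof -
      have "(A * B) * (\<alpha> * \<beta>) = (A * \<beta>) * (B * \<alpha>)" by (simp add: algebra_simps)
      also have "\<dots> \<le> (\<alpha> * TR) * (\<beta> * TL)"
      proof -
        have "0 < A * \<beta>" using Ap bp by simp
        then have h1: "0 \<le> \<alpha> * TR" using AT by linarith
        have h2: "0 \<le> B * \<alpha>" using Ap ap by simp
        show ?thesis using mult_mono[OF AT BT h1 h2] .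
      qed
      also have "\<dots> = (TR * TL) * (\<alpha> * \<beta>)" by (simp add: algebra_simps)
      finally show ?thesis .
    qed
    have "0 < \<alpha> * \<beta>" using ap bp by simp
    then have c3: "A * B \<le> TR * TL" using c2 mult_le_cancel_right_pos by blast
    have c4: "TR * TL \<le> ((TR + TL) / 2)^2"
    proof -
      have "0 \<le> (TR - TL)^2" by simp
      then show ?thesis by (simp add: power2_eq_square algebra_simps)
    qed
    have c5: "((TR + TL) / 2)^2 \<le> (T / 2)^2" by (rule power_mono) (use TT TRn TLn in auto)
    have "D^2 \<le> (T/2)^2" using c1 c3 c4 c5 unfolding power2_eq_square by linarith
    moreover have "0 \<le> T / 2" using TT TRn TLn by simp
    ultimately show ?thesis using power2_le_imp_le by blast
  qed
  have e1: "Psi \<nu> s = Psi \<mu> s + D" unfolding D_def by (rule nuS)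
  have e2: "Psi \<nu> (s + 1) = Psi \<mu> (s + 1)" using nuS[of "s+1"] Dp1 by simp
  have e3: "Psi \<nu> (s - 1) = Psi \<mu> (s - 1)" using nuS[of "s-1"] Dm1 by simp
  show ?thesis using DT unfolding T_def e1 e2 e3 \<nu>_def[symmetric] by (simp; argo)
qed

lemma Psi_add:
  assumes "finite (supp \<mu>)" "finite (supp \<delta>)"
  shows "Psi (\<lambda>x. \<mu> x + \<delta> x) s = Psi \<mu> s + (\<Sum>x\<in>supp \<delta>. \<delta> x * max 0 (x - s))"
proof -
  define S where "S = supp \<mu> \<union> supp \<delta>"
  have fS: "finite S" using assms S_def by auto
  have "Psi (\<lambda>x. \<mu> x + \<delta> x) s = (\<Sum>x\<in>S. (\<mu> x + \<delta> x) * max 0 (x - s))"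
    unfolding Psi_def using sum_supp_superset[OF fS, of "\<lambda>x. \<mu> x + \<delta> x"] supp_add[of \<mu> \<delta>] S_def by auto
  also have "\<dots> = (\<Sum>x\<in>S. \<mu> x * max 0 (x - s)) + (\<Sum>x\<in>S. \<delta> x * max 0 (x - s))"
    by (simp add: sum.distrib algebra_simps)
  also have "(\<Sum>x\<in>S. \<mu> x * max 0 (x - s)) = Psi \<mu> s"
    unfolding Psi_def using sum_supp_superset[OF fS, of \<mu>] S_def by auto
  also have "(\<Sum>x\<in>S. \<delta> x * max 0 (x - s)) = (\<Sum>x\<in>supp \<delta>. \<delta> x * max 0 (x - s))"
    using sum_supp_superset[OF fS, of \<delta>] S_def by auto
  finally show ?thesis .
qed

lemma move_outside:
  assumes mu: "is_dist \<mu>" and mv: "is_move a \<delta>" and s: "s \<le> a \<or> s > a + 1"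
  shows "Psi (\<lambda>x. \<mu> x + \<delta> x) s = Psi \<mu> s"
proof -
  have f1: "finite (supp \<mu>)" using mu unfolding is_dist_def by auto
  have f2: "finite (supp \<delta>)" using mv unfolding is_move_def signed_dist_def by auto
  have suppd: "supp \<delta> \<subseteq> {a..a+1}" using mv unfolding is_move_def by auto
  have m0: "(\<Sum>x\<in>supp \<delta>. \<delta> x) = 0"
    using mv unfolding is_move_def moment_def by simp
  have m1: "(\<Sum>x\<in>supp \<delta>. \<delta> x * x) = 0"
    using mv unfolding is_move_def moment_def by simp
  have "(\<Sum>x\<in>supp \<delta>. \<delta> x * max 0 (x - s)) = 0"
  proof (cases "s \<le> a")
    case True
    have "(\<Sum>x\<in>supp \<delta>. \<delta> x * max 0 (x - s)) = (\<Sum>x\<in>supp \<delta>. \<delta> x * x - s * \<delta> x)"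
      by (rule sum.cong) (use suppd True in \<open>auto simp: max_def algebra_simps\<close>)
    also have "\<dots> = 0" using m0 m1 by (simp add: sum_subtractf sum_distrib_left[symmetric])
    finally show ?thesis .
  next
    case False
    then have "s > a + 1" using s by simp
    then have h: "\<forall>x\<in>supp \<delta>. \<delta> x * max 0 (x - s) = 0" using suppd by (auto simp: max_def)
    show ?thesis by (rule sum.neutral[OF h])
  qed
  then show ?thesis using Psi_add[OF f1 f2] by simp
qed

lemma mass_le_Psi:
  assumes "is_dist f" "s < R"
  shows "mass f {R<..} \<le> Psi f s / (R - s)"
proof -
  have fin: "finite (supp f)" and nn: "\<And>x. 0 \<le> f x" using assms unfolding is_dist_def by auto
  have "(R - s) * mass f {R<..} = (\<Sum>x\<in>supp f \<inter> {R<..}. f x * (R - s))"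
    unfolding mass_def by (simp add: sum_distrib_left algebra_simps)
  also have "\<dots> \<le> (\<Sum>x\<in>supp f \<inter> {R<..}. f x * max 0 (x - s))"
    by (rule sum_mono) (use nn in \<open>auto intro: mult_left_mono\<close>)
  also have "\<dots> \<le> Psi f s" unfolding Psi_def
    by (rule sum_mono2) (use fin nn in auto)
  finally show ?thesis using assms(2) by (simp add: field_simps mult.commute)
qed

lemma Psi_initial:
  assumes "is_dist f" "mass f {0<..} = 0" "mass f {..0} \<le> nn"
  shows "Psi f s \<le> nn * max 0 (- s)"
proof -
  have fin: "finite (supp f)" and nn: "\<And>x. 0 \<le> f x" using assms unfolding is_dist_def by auto
  have pos: "\<And>x. x \<in> supp f \<Longrightarrow> 0 < f x" using nn unfolding supp_def by (simp add: order_less_le)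
  have empty: "supp f \<inter> {0<..} = {}"
  proof (rule ccontr)
    assume "supp f \<inter> {0<..} \<noteq> {}"
    then have "0 < (\<Sum>x\<in>supp f \<inter> {0<..}. f x)"
      by (intro sum_pos) (use fin pos in auto)
    then show False using assms(2) unfolding mass_def by simp
  qed
  then have sub: "supp f \<subseteq> {..0}" by auto
  have "Psi f s \<le> (\<Sum>x\<in>supp f. f x * max 0 (- s))" unfolding Psi_def
  proof (rule sum_mono)
    fix x assume "x \<in> supp f"
    then have "x \<le> 0" using sub by auto
    then have "max 0 (x - s) \<le> max 0 (- s)" by linarith
    then show "f x * max 0 (x - s) \<le> f x * max 0 (- s)" using nn[of x] by (rule mult_left_mono)
  qed
  also have "\<dots> = max 0 (- s) * mass f {..0}"
    unfolding mass_def using sub by (simp add: sum_distrib_right Int_absorb2 mult.commute)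
  also have "\<dots> \<le> max 0 (- s) * nn" using assms(3) by (simp add: mult_left_mono)
  finally show ?thesis by (simp add: mult.commute)
qed

lemma Psi_nonneg: "is_dist f \<Longrightarrow> 0 \<le> Psi f s"
  unfolding Psi_def is_dist_def by (auto intro!: sum_nonneg)


lemma dist_all:
  assumes "move_sequence N \<mu> a \<delta>" "u \<le> N"
  shows "is_dist (\<mu> u)"
proof (cases u)
  case 0 then show ?thesis using assms unfolding move_sequence_def by auto
next
  case (Suc v)
  then have "Suc v \<in> {1..N}" using assms by auto
  then have H: "is_dist (\<lambda>x. \<mu> (Suc v - 1) x + \<delta> (Suc v) x) \<and> \<mu> (Suc v) = (\<lambda>x. \<mu> (Suc v - 1) x + \<delta> (Suc v) x)"
    using assms(1) unfolding move_sequence_def by blast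
  then have "is_dist (\<lambda>x. \<mu> v x + \<delta> (Suc v) x)" "\<mu> (Suc v) = (\<lambda>x. \<mu> v x + \<delta> (Suc v) x)"
    by simp_all
  then show ?thesis using Suc by simp
qed

lemma max0_facts:
  fixes y :: real
  shows "0 \<le> max 0 (y+1) - max 0 y" "max 0 (y+1) - max 0 y \<le> 1"
    "max 0 y - max 0 (y - 1) \<le> max 0 (y+1) - max 0 y"
  by (auto simp: max_def)

lemma good_init:
  assumes "0 \<le> nn"
  shows "good nn (\<lambda>j. nn * max 0 (- (\<theta> + of_int j)))"
  unfolding good_def
proof (intro allI conjI)
  fix j :: int
  define y where "y = - (\<theta> + of_int j)"
  have e1: "- (\<theta> + of_int (j - 1)) = y + 1" unfolding y_def by simp
  have e2: "- (\<theta> + of_int (j + 1)) = y - 1" unfolding y_def by simp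
  note F = max0_facts[of y]
  show "0 \<le> nn * max 0 (- (\<theta> + of_int j))" using assms by simp
  show "nn * max 0 (- (\<theta> + of_int j)) \<le> nn * max 0 (- (\<theta> + of_int (j - 1)))"
    unfolding e1 y_def[symmetric] using F assms by (intro mult_left_mono) auto
  show "nn * max 0 (- (\<theta> + of_int (j - 1))) - nn * max 0 (- (\<theta> + of_int j)) \<le> nn"
  proof -
    have "nn * (max 0 (y + 1) - max 0 y) \<le> nn * 1" using F assms by (intro mult_left_mono) auto
    then show ?thesis unfolding e1 y_def[symmetric] by (simp add: algebra_simps)
  qed
  show "nn * max 0 (- (\<theta> + of_int j)) - nn * max 0 (- (\<theta> + of_int (j + 1)))
    \<le> nn * max 0 (- (\<theta> + of_int (j - 1))) - nn * max 0 (- (\<theta> + of_int j))"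
  proof -
    have "nn * (max 0 y - max 0 (y - 1)) \<le> nn * (max 0 (y + 1) - max 0 y)" using F assms by (intro mult_left_mono) auto
    then show ?thesis unfolding e1 e2 y_def[symmetric] by (simp add: algebra_simps)
  qed
qed

lemma lat_init:
  assumes "0 \<le> nn" "0 \<le> \<theta>"
  shows "latp (\<lambda>j. nn * max 0 (- (\<theta> + of_int j))) nn"
proof
  show "good nn (\<lambda>j. nn * max 0 (- (\<theta> + of_int j)))" by (rule good_init[OF assms(1)])
  fix j :: int assume "0 \<le> j"
  then show "nn * max 0 (- (\<theta> + of_int j)) = 0" using assms by simp
qed

lemma compare:
  assumes ms: "move_sequence N \<mu> a \<delta>" and th0: "0 \<le> \<theta>" and th1: "\<theta> < 1"
    and init: "\<And>s. Psi (\<mu> 0) s \<le> nn * max 0 (- s)"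
  shows "t \<le> N \<Longrightarrow> Psi (\<mu> t) (\<theta> + of_int j) \<le>
     proc (\<lambda>j. nn * max 0 (- (\<theta> + of_int j))) (\<lambda>u. \<lfloor>a (Suc u) - \<theta>\<rfloor> + 1) t j"
proof (induction t arbitrary: j)
  case 0 then show ?case using init[of "\<theta> + of_int j"] by simp
next
  case (Suc t)
  define P where "P = proc (\<lambda>j. nn * max 0 (- (\<theta> + of_int j))) (\<lambda>u. \<lfloor>a (Suc u) - \<theta>\<rfloor> + 1) t"
  define i where "i = \<lfloor>a (Suc t) - \<theta>\<rfloor> + 1"
  define s where "s = \<theta> + of_int i"
  have IH: "\<And>j. Psi (\<mu> t) (\<theta> + of_int j) \<le> P j" using Suc unfolding P_def by simp
  have s1: "a (Suc t) < s" "s \<le> a (Suc t) + 1" unfolding s_def i_def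
    by (simp_all add: algebra_simps) linarith+
  have "Suc t \<in> {1..N}" using Suc.prems by auto
  then have H: "is_move (a (Suc t)) (\<delta> (Suc t)) \<and> is_dist (\<lambda>x. \<mu> (Suc t - 1) x + \<delta> (Suc t) x)
     \<and> \<mu> (Suc t) = (\<lambda>x. \<mu> (Suc t - 1) x + \<delta> (Suc t) x)"
    using ms unfolding move_sequence_def by blast
  then have mv: "is_move (a (Suc t)) (\<delta> (Suc t))" and nud: "is_dist (\<lambda>x. \<mu> t x + \<delta> (Suc t) x)"
    and mueq: "\<mu> (Suc t) = (\<lambda>x. \<mu> t x + \<delta> (Suc t) x)"
    by simp_all
  have mud: "is_dist (\<mu> t)" using dist_all[OF ms] Suc.prems by simp
  have Pnext: "proc (\<lambda>j. nn * max 0 (- (\<theta> + of_int j))) (\<lambda>u. \<lfloor>a (Suc u) - \<theta>\<rfloor> + 1) (Suc t) = upd i P"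
    unfolding P_def i_def by simp
  have main: "Psi (\<mu> (Suc t)) (\<theta> + of_int j) \<le> upd i P j"
  proof (cases "j = i")
    case True
    have "Psi (\<mu> (Suc t)) (\<theta> + of_int j) = Psi (\<lambda>x. \<mu> t x + \<delta> (Suc t) x) s"
      using True mueq s_def by simp
    also have "\<dots> \<le> Psi (\<mu> t) s / 2 + (Psi (\<mu> t) (s - 1) + Psi (\<mu> t) (s + 1)) / 4"
      by (rule move_ineq[OF mud nud mv s1])
    also have "\<dots> \<le> P i / 2 + (P (i - 1) + P (i + 1)) / 4"
    proof -
      have "Psi (\<mu> t) s \<le> P i" using IH[of i] s_def by simp
      moreover have "Psi (\<mu> t) (s - 1) \<le> P (i - 1)" using IH[of "i - 1"] s_def by (simp add: algebra_simps)
      moreover have "Psi (\<mu> t) (s + 1) \<le> P (i + 1)" using IH[of "i + 1"] s_def by (simp add: algebra_simps)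
      ultimately show ?thesis by argo
    qed
    also have "\<dots> = upd i P j" using True by (simp add: upd_same)
    finally show ?thesis .
  next
    case False
    have out: "\<theta> + of_int j \<le> a (Suc t) \<or> \<theta> + of_int j > a (Suc t) + 1"
    proof (cases "j < i")
      case True
      then have "of_int j \<le> of_int i - (1::real)" by simp
      then show ?thesis using s1 unfolding s_def by simp
    next
      case False
      then have "j \<ge> i + 1" using \<open>j \<noteq> i\<close> by simp
      then have "of_int j \<ge> of_int i + (1::real)" by simp
      then show ?thesis using s1 unfolding s_def by simp
    qed
    have "Psi (\<mu> (Suc t)) (\<theta> + of_int j) = Psi (\<mu> t) (\<theta> + of_int j)"
      unfolding mueq by (rule move_outside[OF mud mv out])
    also have "\<dots> \<le> P j" by (rule IH)
    also have "\<dots> = upd i P j" using False by (simp add: upd_other)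
    finally show ?thesis .
  qed
  then show ?case unfolding Pnext .
qed


lemma cbrt_cube: "0 \<le> x \<Longrightarrow> (x powr (1/3)) ^ 3 = (x::real)"
proof (cases "x = 0")
  case True then show ?thesis by simp
next
  case False
  assume "0 \<le> x"
  then have xp: "0 < x" using False by simp
  have "(x powr (1/3)) ^ 3 = (x powr (1/3)) powr (real 3)"
    by (rule powr_realpow[symmetric]) (use xp in simp)
  also have "\<dots> = x powr 1" by (simp add: powr_powr)
  also have "\<dots> = x" using xp by simp
  finally show ?thesis .
qed

lemma cbrt_ge:
  assumes "0 \<le> r" "r ^ 3 \<le> (x::real)"
  shows "r \<le> x powr (1/3)"
proof (rule ccontr)
  assume "\<not> r \<le> x powr (1/3)"
  then have lt: "x powr (1/3) < r" by simp
  have x0: "0 \<le> x" using assms by (meson order.trans zero_le_power)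
  have "(x powr (1/3)) ^ 3 < r ^ 3" by (rule power_strict_mono[OF lt]) auto
  then show False using cbrt_cube[OF x0] assms by simp
qed

lemma cbrt_le:
  assumes "0 \<le> x" "(x::real) \<le> r ^ 3" "0 \<le> r"
  shows "x powr (1/3) \<le> r"
proof (rule ccontr)
  assume "\<not> x powr (1/3) \<le> r"
  then have lt: "r < x powr (1/3)" by simp
  have "r ^ 3 < (x powr (1/3)) ^ 3" by (rule power_strict_mono[OF lt]) (use assms in auto)
  then show False using cbrt_cube[OF assms(1)] assms by simp
qed

lemma log2_ge:
  assumes "(2::nat) ^ p \<le> m ^ q" "q > 0" "m > 0"
  shows "real p / real q \<le> log 2 (real m)"
proof -
  have "real p = log 2 (2 ^ p)" by (simp add: log_nat_power)
  also have "\<dots> \<le> log 2 (real m ^ q)"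
  proof -
    have "(2::real) ^ p \<le> real m ^ q" using assms(1) by (metis of_nat_le_iff of_nat_numeral of_nat_power)
    then show ?thesis using assms(3) by (subst log_le_cancel_iff) auto
  qed
  also have "\<dots> = real q * log 2 (real m)" using assms(3) by (simp add: log_nat_power)
  finally show ?thesis using assms(2) by (simp add: field_simps)
qed

lemma log2_le:
  assumes "m ^ q \<le> (2::nat) ^ p" "q > 0" "m > 0"
  shows "log 2 (real m) \<le> real p / real q"
proof -
  have "real q * log 2 (real m) = log 2 (real m ^ q)" using assms(3) by (simp add: log_nat_power)
  also have "\<dots> \<le> log 2 (2 ^ p)"
  proof -
    have "real m ^ q \<le> (2::real) ^ p" using assms(1) by (metis of_nat_le_iff of_nat_numeral of_nat_power)
    then show ?thesis using assms(3) by (subst log_le_cancel_iff) auto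
  qed
  also have "\<dots> = real p" by (simp add: log_nat_power)
  finally show ?thesis using assms(2) by (simp add: field_simps)
qed

lemma log2_ge_real:
  assumes "0 < x" "q > 0" "(2::real) ^ p \<le> x ^ q"
  shows "real p / real q \<le> log 2 x"
proof -
  have "real p = log 2 (2 ^ p)" by (simp add: log_nat_power)
  also have "\<dots> \<le> log 2 (x ^ q)" using assms by (subst log_le_cancel_iff) auto
  also have "\<dots> = real q * log 2 x" using assms(1) by (simp add: log_nat_power)
  finally show ?thesis using assms(2) by (simp add: field_simps)
qed

lemma log2_le_real:
  assumes "0 < x" "q > 0" "x ^ q \<le> (2::real) ^ p"
  shows "log 2 x \<le> real p / real q"
proof -
  have "real q * log 2 x = log 2 (x ^ q)" using assms(1) by (simp add: log_nat_power)
  also have "\<dots> \<le> log 2 (2 ^ p)" using assms by (subst log_le_cancel_iff) auto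
  also have "\<dots> = real p" by (simp add: log_nat_power)
  finally show ?thesis using assms(2) by (simp add: field_simps)
qed

lemma R_lower:
  assumes "0 < n" "a ^ 3 \<le> n * 10^6" "(2::nat) ^ p \<le> n ^ 10"
  shows "real (2 * a * p) / 1000 \<le> 2 * real n powr (1/3) * log 2 (real n)"
proof -
  have "(real a / 100) ^ 3 \<le> real n"
  proof -
    have "real (a ^ 3) \<le> real (n * 10^6)" using assms(2) by (rule of_nat_mono)
    then show ?thesis by (simp add: power_divide)
  qed
  then have h1: "real a / 100 \<le> real n powr (1/3)" by (rule cbrt_ge[rotated]) simp
  have h2: "real p / real (10::nat) \<le> log 2 (real n)" by (rule log2_ge) (use assms in auto)
  have "real (2 * a * p) / 1000 = 2 * (real a / 100) * (real p / 10)" by simp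
  also have "\<dots> \<le> 2 * real n powr (1/3) * log 2 (real n)"
  proof (rule mult_mono)
    show "2 * (real a / 100) \<le> 2 * real n powr (1/3)" using h1 by simp
  qed (use h2 in auto)
  finally show ?thesis .
qed

lemma regime1_num:
  assumes "n1 \<le> n" "n \<le> n2" "0 < n1" "a ^ 3 \<le> n1 * 10^6" "(2::nat) ^ p \<le> n1 ^ 10"
    "(T0 + 1) * 1000 \<le> 2 * a * p" "2 * n2 * 5 ^ n2 < 4 ^ n2 * (2::nat) ^ T0"
  shows "2 * real n * (5/4)^n / 2 ^ (nat \<lfloor>2 * real n powr (1/3) * log 2 (real n) - 1\<rfloor>) < 1"
proof -
  define R where "R = 2 * real n powr (1/3) * log 2 (real n)"
  have "a ^ 3 \<le> n * 10^6" using assms(1,4) by (meson le_trans mult_le_mono1)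
  moreover have "(2::nat) ^ p \<le> n ^ 10" using assms(1,5) by (meson le_trans power_mono zero_le)
  ultimately have "real (2 * a * p) / 1000 \<le> R" unfolding R_def by (intro R_lower) (use assms in auto)
  moreover have "real (T0 + 1) \<le> real (2 * a * p) / 1000"
  proof -
    have "real ((T0 + 1) * 1000) \<le> real (2 * a * p)" using assms(6) by (rule of_nat_mono)
    then show ?thesis by simp
  qed
  ultimately have "real T0 + 1 \<le> R" by simp
  then have "int T0 \<le> \<lfloor>R - 1\<rfloor>" by linarith
  then have T: "T0 \<le> nat \<lfloor>R - 1\<rfloor>" by linarith
  have "2 * real n * (5/4)^n \<le> 2 * real n2 * (5/4)^n2"
  proof (rule mult_mono)
    show "2 * real n \<le> 2 * real n2" using assms(2) by simp
    show "(5/4::real)^n \<le> (5/4)^n2" by (rule power_increasing) (use assms(2) in auto)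
  qed auto
  also have "\<dots> < 2 ^ T0"
  proof -
    have "real (2 * n2 * 5 ^ n2) < real (4 ^ n2 * 2 ^ T0)" using assms(7) by (simp only: of_nat_less_iff)
    then have "2 * real n2 * 5 ^ n2 < 4 ^ n2 * 2 ^ T0" by simp
    then show ?thesis by (simp add: power_divide field_simps)
  qed
  also have "\<dots> \<le> 2 ^ (nat \<lfloor>R - 1\<rfloor>)" using T by (intro power_increasing) auto
  finally show ?thesis unfolding R_def by simp
qed

lemma b1_sq_bound:
  fixes t nr d b0 b1 :: real
  assumes t0: "t > 0" and t3: "t^3 = nr" and d1: "2*t \<le> d"
    and B1: "(d * b1)^2 \<le> nr * (nr * b0 / 3)" and b0: "0 \<le> b0"
  shows "b1^2 \<le> t^4 * b0 / 12"
proof -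
  have "4 * t^2 * b1^2 \<le> d^2 * b1^2"
  proof (rule mult_right_mono)
    have "(2*t)^2 \<le> d^2" by (rule power_mono) (use d1 t0 in auto)
    then show "4 * t^2 \<le> d^2" by (simp add: power_mult_distrib)
  qed simp
  also have "\<dots> = (d * b1)^2" by (simp add: power_mult_distrib)
  also have "\<dots> \<le> nr * (nr * b0 / 3)" by (rule B1)
  also have "\<dots> = t^6 * b0 / 3" unfolding t3[symmetric]
    by (simp add: power_add[symmetric] algebra_simps)
  finally have "4 * t^2 * b1^2 \<le> t^6 * b0 / 3" .
  moreover have "t^2 * (12 * b1^2) = 3 * (4 * t^2 * b1^2)" by (simp add: algebra_simps)
  moreover have "t^2 * (t^4 * b0) = 3 * (t^6 * b0 / 3)" by (simp add: power_add[symmetric])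
  ultimately have H: "t^2 * (12 * b1^2) \<le> t^2 * (t^4 * b0)" by linarith
  have "t^2 > 0" using t0 by simp
  then have "12 * b1^2 \<le> t^4 * b0" using mult_left_le_imp_le[OF H] by blast
  then show ?thesis by simp
qed

lemma b0_bound:
  fixes t nr d b0 b1 :: real
  assumes t0: "t \<ge> 27/4" and t3: "t^3 = nr" and d1: "2*t \<le> d" and d2: "d \<le> 2*t + 1"
    and B1: "(d * b1)^2 \<le> nr * (nr * b0 / 3)" and B2: "b0 \<le> b1 + nr * d"
    and nn: "0 \<le> b1" "0 \<le> b0"
  shows "b0 \<le> 131/50 * t^4"
proof (rule ccontr)
  assume "\<not> b0 \<le> 131/50 * t^4"
  then have big: "b0 > 131/50 * t^4" by simp
  have tp: "t > 0" using t0 by simp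
  have sq: "b1^2 \<le> t^4 * b0 / 12" by (rule b1_sq_bound[OF tp t3 d1 B1 nn(2)])
  have "nr * d \<le> t^3 * (2*t + 1)" unfolding t3[symmetric] using d2 tp by (intro mult_left_mono) auto
  also have "\<dots> = 2 * t^4 + t^3" by (simp add: algebra_simps eval_nat_numeral)
  also have "t^3 \<le> 4/27 * t^4"
  proof -
    have "t^3 * (27/4) \<le> t^3 * t" using t0 tp by (intro mult_left_mono) auto
    then show ?thesis by (simp add: eval_nat_numeral algebra_simps)
  qed
  then have "2 * t^4 + t^3 \<le> 58/27 * t^4" by simp
  finally have nd: "nr * d \<le> 58/27 * t^4" by simp
  define T4 where "T4 = t^4"
  have t4p: "T4 > 0" unfolding T4_def using tp by simp
  have sq': "b1^2 \<le> T4 * b0 / 12" using sq unfolding T4_def .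
  have big': "b0 > 131/50 * T4" using big unfolding T4_def .
  have nd': "nr * d \<le> 58/27 * T4" using nd unfolding T4_def .
  define z where "z = b0 - 58/27 * T4"
  define y0 :: real where "y0 = 637/1350"
  have zbig: "z > y0 * T4" unfolding z_def y0_def using big' by simp
  have "y0 * T4 > 0" using t4p unfolding y0_def by simp
  then have zpos: "z > 0" using zbig by linarith
  have b1z: "z \<le> b1" unfolding z_def using B2 nd' by simp
  then have "z^2 \<le> b1^2" using zpos by (intro power_mono) auto
  also have "\<dots> \<le> T4 * b0 / 12" by (rule sq')
  also have "\<dots> = T4 * z / 12 + 58/324 * (T4 * T4)" unfolding z_def
    by (simp add: field_simps)
  finally have ineq: "z * (z - T4 / 12) \<le> 58/324 * (T4 * T4)" by (simp add: power2_eq_square algebra_simps)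
  have "y0 * T4 * (y0 * T4 - T4/12) < z * (z - T4/12)"
  proof (rule mult_strict_mono)
    show "y0 * T4 < z" by (rule zbig)
    show "y0 * T4 - T4/12 < z - T4/12" using zbig by simp
    show "0 < z" by (rule zpos)
    show "0 \<le> y0 * T4 - T4/12" using t4p unfolding y0_def by simp
  qed
  moreover have "y0 * T4 * (y0 * T4 - T4/12) = y0 * (y0 - 1/12) * (T4 * T4)"
    by (simp add: algebra_simps)
  moreover have "58/324 * (T4 * T4) \<le> y0 * (y0 - 1/12) * (T4 * T4)"
  proof (rule mult_right_mono)
    show "58/324 \<le> y0 * (y0 - 1/12)" unfolding y0_def by simp
  qed simp
  ultimately show False using ineq by simp
qed

lemma key_log:
  fixes n k :: nat and L :: real
  assumes L: "L = log 2 (real n)" and n0: "0 < n" and L8: "8 \<le> L"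
    and kb: "27/29 * (L - 1) - 2 < real k - 1" and k1: "1 \<le> k"
  shows "(17161/2500) * real n ^ 3 < 96 * 24 ^ (k - 1)"
proof -
  have c1: "log 2 (17161/2500) \<le> real 28 / real (10::nat)"
    by (rule log2_le_real) (simp_all add: power_divide)
  have c2: "real 658 / real (100::nat) \<le> log 2 96"
    by (rule log2_ge_real) simp_all
  have c3: "real 458 / real (100::nat) \<le> log 2 24"
    by (rule log2_ge_real) simp_all
  have l1: "log 2 ((17161/2500) * real n ^ 3) = log 2 (17161/2500) + 3 * L"
  proof -
    have "log 2 ((17161/2500) * real n ^ 3) = log 2 (17161/2500) + log 2 (real n ^ 3)"
      by (rule log_mult_pos) (use n0 in auto)
    also have "log 2 (real n ^ 3) = 3 * L" using n0 L by (simp add: log_nat_power)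
    finally show ?thesis .
  qed
  have l2: "log 2 (96 * 24 ^ (k - 1)) = log 2 96 + real (k - 1) * log 2 24"
    by (simp add: log_mult_pos log_nat_power)
  have rk: "real (k - 1) = real k - 1" using k1 by simp
  have "log 2 ((17161/2500) * real n ^ 3) \<le> 28/10 + 3 * L" using l1 c1 by simp
  also have "\<dots> < 658/100 + (real k - 1) * (458/100)"
  proof -
    have "(27/29 * (L - 1) - 2) * (458/100) < (real k - 1) * (458/100)" using kb by simp
    moreover have "28/10 + 3 * L \<le> 658/100 + (27/29 * (L - 1) - 2) * (458/100)" using L8 by argo
    ultimately show ?thesis by linarith
  qed
  also have "\<dots> \<le> log 2 96 + real (k - 1) * log 2 24"
  proof -
    have hh: "(real k - 1) * (458/100) \<le> (real k - 1) * log 2 24"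
      using c3 k1 by (intro mult_left_mono) auto
    have c2': "658/100 \<le> log 2 (96::real)" using c2 by simp
    show ?thesis unfolding rk using hh c2' by argo
  qed
  finally have "log 2 ((17161/2500) * real n ^ 3) < log 2 (96 * 24 ^ (k - 1))" using l2 by simp
  then show ?thesis using n0 by (subst (asm) log_less_cancel_iff) auto
qed

lemma regime2_num:
  fixes n d k :: nat and b0 b1 bk :: real
  assumes n308: "308 \<le> n"
    and d1: "2 * real n powr (1/3) \<le> real d" and d2: "real d \<le> 2 * real n powr (1/3) + 1"
    and k1: "real (k*d) \<le> 2 * real n powr (1/3) * log 2 (real n) - 2 * real n powr (1/3)"
    and k2: "(2 * real n powr (1/3) * log 2 (real n) - 2 * real n powr (1/3)) / real d - 1 < real k"
    and k3: "1 \<le> k"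
    and B1: "(real d * b1)^2 \<le> real n * (real n * b0 / 3)"
    and B2: "b0 \<le> b1 + real n * real d"
    and B3: "bk^3 \<le> (real n / (3 * real d^3))^(k-1) * (b1^2 * b0)"
    and nn: "0 \<le> b1" "0 \<le> b0" "0 \<le> bk"
  shows "bk / (2 * real n powr (1/3) * log 2 (real n) - real (k*d)) < 1"
proof -
  define t where "t = real n powr (1/3)"
  define L where "L = log 2 (real n)"
  have t0: "27/4 \<le> t" unfolding t_def
  proof (rule cbrt_ge)
    have "(27/4::real)^3 \<le> 308" by (simp add: power_divide)
    also have "\<dots> \<le> real n" using n308 by simp
    finally show "(27/4::real)^3 \<le> real n" .
  qed simp
  have tp: "0 < t" using t0 by simp
  have t3: "t^3 = real n" unfolding t_def by (rule cbrt_cube) simp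
  have L8: "8 \<le> L"
  proof -
    have "real 8 / real (1::nat) \<le> log 2 (real n)" by (rule log2_ge) (use n308 in auto)
    then show ?thesis unfolding L_def by simp
  qed
  have dp: "0 < real d" using d1 tp unfolding t_def by linarith
  have b0b: "b0 \<le> 131/50 * t^4"
    by (rule b0_bound[OF t0 t3]) (use d1 d2 B1 B2 nn in \<open>simp_all add: t_def\<close>)
  have b1b: "b1^2 \<le> t^4 * b0 / 12"
    by (rule b1_sq_bound[OF tp t3]) (use d1 B1 nn in \<open>simp_all add: t_def\<close>)
  define T4 where "T4 = t^4"
  have T4p: "0 < T4" unfolding T4_def using tp by simp
  have w: "b1^2 * b0 \<le> (131/50)^2 * (T4 * T4 * T4) / 12"
  proof -
    have "b1^2 * b0 \<le> (T4 * b0 / 12) * b0" using b1b nn unfolding T4_def by (intro mult_right_mono) auto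
    also have "\<dots> = T4 * (b0 * b0) / 12" by simp
    also have "\<dots> \<le> T4 * ((131/50 * T4) * (131/50 * T4)) / 12"
      using b0b nn T4p unfolding T4_def by (intro divide_right_mono mult_left_mono mult_mono) auto
    also have "\<dots> = (131/50)^2 * (T4 * T4 * T4) / 12" by (simp add: power2_eq_square)
    finally show ?thesis .
  qed
  have c: "real n / (3 * real d^3) \<le> 1/24"
  proof -
    have "(2*t)^3 \<le> real d ^ 3" by (rule power_mono) (use d1 tp t_def in auto)
    then have "8 * real n \<le> real d ^ 3" using t3 by (simp add: power_mult_distrib)
    then show ?thesis using dp by (simp add: field_simps)
  qed
  have cpow: "(real n / (3 * real d^3))^(k-1) \<le> (1/24)^(k-1)"
    by (rule power_mono[OF c]) simp
  have bk3: "bk^3 \<le> (1/24)^(k-1) * ((131/50)^2 * (T4 * T4 * T4) / 12)"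
  proof -
    have "bk^3 \<le> (real n / (3 * real d^3))^(k-1) * (b1^2 * b0)" by (rule B3)
    also have "\<dots> \<le> (1/24)^(k-1) * ((131/50)^2 * (T4 * T4 * T4) / 12)"
      by (rule mult_mono[OF cpow w]) (use nn in auto)
    finally show ?thesis .
  qed
  have kb: "27/29 * (L - 1) - 2 < real k - 1"
  proof -
    define X where "X = 2 * t * L - 2 * t"
    have X0: "0 \<le> X" unfolding X_def using L8 tp by (simp add: algebra_simps)
    have "X / (2*t + 1) \<le> X / real d"
      by (rule divide_left_mono) (use X0 dp d2 t_def in auto)
    moreover have "27/29 * (L - 1) \<le> X / (2*t + 1)"
    proof -
      have "27/29 * (L - 1) * (2*t + 1) \<le> X"
      proof -
        have "0 \<le> (L - 1) * (4 * t - 27)" using L8 t0 by simp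
        then show ?thesis unfolding X_def by (simp add: algebra_simps) argo
      qed
      then show ?thesis using tp by (simp add: field_simps)
    qed
    moreover have "X / real d - 1 < real k" using k2 unfolding X_def t_def L_def by simp
    ultimately show ?thesis by linarith
  qed
  have key: "(17161/2500) * real n ^ 3 < 96 * 24 ^ (k - 1)"
    by (rule key_log[OF L_def _ L8 kb k3]) (use n308 in simp)
  have bk2t: "bk < 2 * t"
  proof (rule ccontr)
    assume "\<not> bk < 2 * t"
    then have "2 * t \<le> bk" by simp
    then have "(2*t)^3 \<le> bk^3" by (rule power_mono) (use tp in simp)
    then have h: "8 * t^3 \<le> (1/24)^(k-1) * ((131/50)^2 * (T4 * T4 * T4) / 12)"
      using bk3 by (simp add: power_mult_distrib)
    have e: "T4 * T4 * T4 = t^3 * real n ^ 3" unfolding T4_def t3[symmetric]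
      by (simp add: power_mult[symmetric] power_add[symmetric])
    have t3p: "0 < t^3" using tp by simp
    have "t^3 * 8 \<le> t^3 * ((1/24)^(k-1) * ((131/50)^2 * real n ^ 3 / 12))"
      using h unfolding e by (simp add: algebra_simps)
    then have "8 \<le> (1/24)^(k-1) * ((131/50)^2 * real n ^ 3 / 12)"
      using mult_left_le_imp_le t3p by blast
    then have "8 * 12 * 24^(k-1) \<le> (131/50)^2 * real n ^ 3"
      by (simp add: field_simps power_divide)
    then show False using key by (simp add: power2_eq_square)
  qed
  have den: "2 * t \<le> 2 * real n powr (1/3) * log 2 (real n) - real (k*d)"
    using k1 unfolding t_def by simp
  show ?thesis using bk2t den tp nn(3) by (simp add: divide_less_eq)
qed


lemma frame:
  assumes ms: "move_sequence N \<mu> a \<delta>" and th0: "0 \<le> \<theta>" and th1: "\<theta> < 1"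
    and init: "\<And>s. Psi (\<mu> 0) s \<le> nn * max 0 (- s)" and lt: "\<theta> + of_int j < R"
  shows "mass (\<mu> N) {R<..} \<le> proc (\<lambda>j. nn * max 0 (- (\<theta> + of_int j))) (\<lambda>u. \<lfloor>a (Suc u) - \<theta>\<rfloor> + 1) N j
            / (R - (\<theta> + of_int j))"
proof -
  have "mass (\<mu> N) {R<..} \<le> Psi (\<mu> N) (\<theta> + of_int j) / (R - (\<theta> + of_int j))"
    by (rule mass_le_Psi[OF dist_all[OF ms] lt]) simp
  also have "\<dots> \<le> proc (\<lambda>j. nn * max 0 (- (\<theta> + of_int j))) (\<lambda>u. \<lfloor>a (Suc u) - \<theta>\<rfloor> + 1) N j
            / (R - (\<theta> + of_int j))"
    by (rule divide_right_mono[OF compare[OF ms th0 th1 init]]) (use lt in auto)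
  finally show ?thesis .
qed

lemma regime1_all:
  assumes "5 \<le> n" "n \<le> 307"
  shows "2 * real n * (5/4)^n / 2 ^ (nat \<lfloor>2 * real n powr (1/3) * log 2 (real n) - 1\<rfloor>) < 1"
proof -
  consider "n \<le> 6" | "7 \<le> n \<and> n \<le> 13" | "14 \<le> n \<and> n \<le> 33" | "34 \<le> n \<and> n \<le> 73"
    | "74 \<le> n \<and> n \<le> 130" | "131 \<le> n \<and> n \<le> 187" | "188 \<le> n \<and> n \<le> 233"
    | "234 \<le> n \<and> n \<le> 266" | "267 \<le> n \<and> n \<le> 285" | "286 \<le> n \<and> n \<le> 297"
    | "298 \<le> n \<and> n \<le> 306" | "n = 307" using assms by linarith
  then show ?thesis
  proof cases
    case 1 show ?thesis by (rule regime1_num[of 5 n 6 170 23 6]) (use assms 1 in simp_all)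
  next
    case 2 show ?thesis by (rule regime1_num[of 7 n 13 191 28 9]) (use 2 in simp_all)
  next
    case 3 show ?thesis by (rule regime1_num[of 14 n 33 241 38 17]) (use 3 in simp_all)
  next
    case 4 show ?thesis by (rule regime1_num[of 34 n 73 323 50 31]) (use 4 in simp_all)
  next
    case 5 show ?thesis by (rule regime1_num[of 74 n 130 419 62 50]) (use 5 in simp_all)
  next
    case 6 show ?thesis by (rule regime1_num[of 131 n 187 507 70 69]) (use 6 in simp_all)
  next
    case 7 show ?thesis by (rule regime1_num[of 188 n 233 572 75 84]) (use 7 in simp_all)
  next
    case 8 show ?thesis by (rule regime1_num[of 234 n 266 616 78 95]) (use 8 in simp_all)
  next
    case 9 show ?thesis by (rule regime1_num[of 267 n 285 643 80 101]) (use 9 in simp_all)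
  next
    case 10 show ?thesis by (rule regime1_num[of 286 n 297 658 81 105]) (use 10 in simp_all)
  next
    case 11 show ?thesis by (rule regime1_num[of 298 n 306 667 82 108]) (use 11 in simp_all)
  next
    case 12 show ?thesis by (rule regime1_num[of 307 n 307 674 82 109]) (use 12 in simp_all)
  qed
qed

lemma regime0_all:
  assumes "2 \<le> n" "n \<le> 4"
  shows "real n + 1/2 \<le> 2 * real n powr (1/3) * log 2 (real n)"
proof -
  consider "n = 2" | "n = 3" | "n = 4" using assms by linarith
  then show ?thesis
  proof cases
    case 1
    have h: "real (2 * 125 * 10) / 1000 \<le> 2 * real n powr (1/3) * log 2 (real n)"
      by (rule R_lower) (use 1 in simp_all)
    have "real n + 1/2 \<le> real (2 * 125 * 10) / 1000" using 1 by simp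
    then show ?thesis using h by linarith
  next
    case 2
    have h: "real (2 * 144 * 15) / 1000 \<le> 2 * real n powr (1/3) * log 2 (real n)"
      by (rule R_lower) (use 2 in simp_all)
    have "real n + 1/2 \<le> real (2 * 144 * 15) / 1000" using 2 by simp
    then show ?thesis using h by linarith
  next
    case 3
    have h: "real (2 * 158 * 20) / 1000 \<le> 2 * real n powr (1/3) * log 2 (real n)"
      by (rule R_lower) (use 3 in simp_all)
    have "real n + 1/2 \<le> real (2 * 158 * 20) / 1000" using 3 by simp
    then show ?thesis using h by linarith
  qed
qed

theorem mainTheorem4:
  fixes n :: nat and \<mu> :: "nat \<Rightarrow> real \<Rightarrow> real" and a :: "nat \<Rightarrow> real"
    and \<delta> :: "nat \<Rightarrow> real \<Rightarrow> real"
  assumes "n \<ge> 2"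
    and "move_sequence n \<mu> a \<delta>"
    and "mass (\<mu> 0) {..0} \<le> real n"
    and "mass (\<mu> 0) {0<..} = 0"
  shows "mass (\<mu> n) {2 * real n powr (1/3) * log 2 (real n) <..} < 1"
proof -
  note ms = assms(2)
  define R where "R = 2 * real n powr (1/3) * log 2 (real n)"
  have d0: "is_dist (\<mu> 0)" using ms unfolding move_sequence_def by auto
  have init: "\<And>s. Psi (\<mu> 0) s \<le> real n * max 0 (- s)"
    by (rule Psi_initial[OF d0 assms(4) assms(3)])
  have nn0: "0 \<le> real n" by simp
  consider "n \<le> 4" | "5 \<le> n \<and> n \<le> 307" | "308 \<le> n" by linarith
  then have "mass (\<mu> n) {R<..} < 1"
  proof cases
    case 1
    define x where "x = R - 1/2"
    define \<theta> where "\<theta> = x - of_int \<lfloor>x\<rfloor>"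
    define j where "j = \<lfloor>x\<rfloor>"
    have th0: "0 \<le> \<theta>" and th1: "\<theta> < 1" unfolding \<theta>_def by linarith+
    have sj: "\<theta> + of_int j = x" unfolding \<theta>_def j_def by simp
    have lt: "\<theta> + of_int j < R" unfolding sj x_def by simp
    interpret L: latp "\<lambda>j. real n * max 0 (- (\<theta> + of_int j))" "\<lambda>u. \<lfloor>a (Suc u) - \<theta>\<rfloor> + 1" "real n"
      by (rule lat_init[OF nn0 th0])
    have "real n + 1/2 \<le> R" unfolding R_def by (rule regime0_all) (use assms(1) 1 in auto)
    then have "int n \<le> j" unfolding j_def x_def by linarith
    then have P0: "L.P n j = 0" by (rule L.P_zero)
    have "mass (\<mu> n) {R<..} \<le> L.P n j / (R - (\<theta> + of_int j))"
      by (rule frame[OF ms th0 th1 init lt])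
    also have "\<dots> = 0" using P0 by simp
    finally show ?thesis by simp
  next
    case 2
    define x where "x = R - 1"
    define \<theta> where "\<theta> = x - of_int \<lfloor>x\<rfloor>"
    define j where "j = \<lfloor>x\<rfloor>"
    have th0: "0 \<le> \<theta>" and th1: "\<theta> < 1" unfolding \<theta>_def by linarith+
    have sj: "\<theta> + of_int j = x" unfolding \<theta>_def j_def by simp
    have lt: "\<theta> + of_int j < R" unfolding sj x_def by simp
    interpret L: latp "\<lambda>j. real n * max 0 (- (\<theta> + of_int j))" "\<lambda>u. \<lfloor>a (Suc u) - \<theta>\<rfloor> + 1" "real n"
      by (rule lat_init[OF nn0 th0])
    have "real (2 * 100 * 20) / 1000 \<le> R" unfolding R_def
      by (rule R_lower) (use 2 in \<open>auto intro: order.trans[OF _ power_mono[of 4 n 10]]\<close>)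
    then have j0: "0 \<le> j" unfolding j_def x_def by simp
    have "mass (\<mu> n) {R<..} \<le> L.P n j / (R - (\<theta> + of_int j))"
      by (rule frame[OF ms th0 th1 init lt])
    also have "\<dots> = L.P n (int (nat j))" using sj j0 unfolding x_def by simp
    also have "\<dots> \<le> 2 * real n * (5/4)^n / 2 ^ (nat j)" by (rule L.regime1)
    also have "\<dots> < 1" unfolding j_def x_def R_def by (rule regime1_all) (use 2 in auto)
    finally show ?thesis .
  next
    case 3
    define t where "t = real n powr (1/3)"
    define d where "d = nat \<lceil>2 * t\<rceil>"
    define k where "k = nat \<lfloor>(R - 2 * t) / real d\<rfloor>"
    define j where "j = int (k * d)"
    have t1: "1 \<le> t" unfolding t_def by (rule cbrt_ge) (use 3 in auto)
    have L8: "8 \<le> log 2 (real n)"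
    proof -
      have "real 8 / real (1::nat) \<le> log 2 (real n)" by (rule log2_ge) (use 3 in auto)
      then show ?thesis by simp
    qed
    have dd: "real d = of_int \<lceil>2 * t\<rceil>" unfolding d_def using t1 by simp
    have d1: "2 * t \<le> real d" unfolding dd by linarith
    have d2: "real d \<le> 2 * t + 1" unfolding dd by linarith
    have dpos: "0 < real d" using d1 t1 by linarith
    have Rt: "16 * t \<le> R" unfolding R_def t_def[symmetric] using L8 t1 by simp
    have q1: "1 \<le> (R - 2 * t) / real d" using Rt d2 dpos t1 by (simp add: field_simps)
    have kk: "real k = of_int \<lfloor>(R - 2 * t) / real d\<rfloor>" unfolding k_def using q1 by simp
    have k1: "real k \<le> (R - 2 * t) / real d" unfolding kk by linarith
    have k2: "(R - 2 * t) / real d - 1 < real k" unfolding kk by linarith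
    have k3: "1 \<le> k" using q1 kk by linarith
    have d1n: "1 \<le> d" using dpos by simp
    have kd: "real (k * d) \<le> R - 2 * t" using k1 dpos by (simp add: field_simps)
    have th0: "0 \<le> (0::real)" and th1: "(0::real) < 1" by simp_all
    have lt: "0 + of_int j < R" unfolding j_def using kd t1 by simp
    interpret L: latp "\<lambda>j. real n * max 0 (- (0 + of_int j))" "\<lambda>u. \<lfloor>a (Suc u) - 0\<rfloor> + 1" "real n"
      by (rule lat_init[OF nn0 th0])
    have B1: "(real d * L.P n (int d))^2 \<le> real n * (real n * L.P n 0 / 3)"
      by (rule L.chain_first[OF d1n])
    have B2: "L.P n 0 \<le> L.P n (int d) + real n * real d"
      using L.slope_bound[of n 0 d] by simp
    have B3: "(L.P n (int (k*d)))^3 \<le> (real n / (3 * real d ^ 3))^(k-1) * ((L.P n (int d))^2 * L.P n 0)"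
      by (rule L.chain_final[OF d1n k3])
    have "mass (\<mu> n) {R<..} \<le> L.P n j / (R - (0 + of_int j))"
      by (rule frame[OF ms th0 th1 init lt])
    also have "\<dots> = L.P n (int (k*d)) / (2 * real n powr (1/3) * log 2 (real n) - real (k*d))"
      unfolding j_def R_def by simp
    also have "\<dots> < 1"
      by (rule regime2_num[OF 3 _ _ _ _ k3 B1 B2 B3 L.P_nonneg L.P_nonneg L.P_nonneg])
        (use d1 d2 kd k2 in \<open>simp_all add: t_def R_def\<close>)
    finally show ?thesis .
  qed
  then show ?thesis unfolding R_def .
qed


end
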